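(* Let $\mathbf{F}$ be a field of characteristic $3$, let $\lambda=(\lambda_1,\lambda_2)$ be a partition of $r$ with $m=\lambda_1-\lambda_2$, and let $g\in\mathbf{N}_0$ with $g\le\lambda_2$ and $B(m,g)\not\equiv0\pmod 3$. Put $\lambda=(m+g,g)$ so that $r=m+2g$. Then $e_{m,g}M^{(m+g,g)}\cong M^{(r,0)}=Y^{(r,0)}$. More precisely, with $u=B(m,g)\,1_{\lambda}f^{(g)}1_{(r,0)}$ and $v=1_{(r,0)}e^{(g)}1_\lambda$ in the Schur algebra $S_\mathbf{F}(2,r)=\operatorname{End}_{\mathbf{F}S_r}(E^{\otimes r})$, one has $uv=e_{m,g}$ and $vu=1_{(r,0)}$.
   Context: $E$ has basis $v_1,v_2$; $S_r$ acts on $E^{\otimes r}$ by place permutation; for a composition $\nu=(\nu_1,\nu_2)$ of $r$, $M^\nu$ is the span of the $v_{i_1}\otimes\cdots\otimes v_{i_r}$ with $\nu_1$ indices $1$ and $\nu_2$ indices $2$, and $1_\nu$ is the projection of $E^{\otimes r}$ onto $M^\nu$. $e=e_{21},f=e_{12}\in\mathfrak{gl}_2$ act on $E^{\otimes r}$, with divided powers $e^{(a)},f^{(a)}$ (integral operators reduced mod 3). $S_\mathbf{F}(\lambda)=1_\lambda S_\mathbf{F}(2,r)1_\lambda=\operatorname{End}_{\mathbf{F}S_r}(M^\lambda)$ has basis $b(i)=1_\lambda f^{(i)}e^{(i)}1_\lambda$, $0\le i\le\lambda_2$, with $b(0)=\mathbf{1}$, multiplication $b(i)b(j)=\sum_{h=\max\{i,j\}}^{i+j}\binom{h}{i}\binom{h}{j}\binom{m+i+j}{i+j-h}b(h)$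 and $b(a)=0$ for $a>\lambda_2$. $Y^{(r,0)}$ denotes the Young module, equal to the trivial module $M^{(r,0)}$. $B(m,g)=\binom{m+2g}{g}$; with base-3 digits $(m+2g)_u,g_u$, let $I^{(0)}=\{u: g_u=0,(m+2g)_u=0\}$, $J^{(0)}=\{u:g_u=1,(m+2g)_u=2\}$, $I^{(1)}=\{u:g_u=0,(m+2g)_u=1\}$, $J^{(1)}=\{u:g_u=2,(m+2g)_u=2\}$, $I^{(2)}=\{u:g_u=0,(m+2g)_u=2\}$, $J^{(2)}=\{u:g_u=1,(m+2g)_u=1\}$ and \[e_{m,g}=\prod_{u\in I^{(0)}}(\mathbf{1}+b(3^u)-b(2\cdot3^u))\prod_{u\in J^{(0)}}(b(2\cdot3^u)-b(3^u))\prod_{u\in I^{(1)}}(\mathbf{1}-b(2\cdot3^u))\prod_{u\in J^{(1)}}b(2\cdot3^u)\prod_{u\in I^{(2)}}(\mathbf{1}-b(3^u)+b(2\cdot3^u))\prod_{u\in J^{(2)}}(b(3^u)-b(2\cdot3^u)),\] with $b(a)=0$ for $a>\lambda_2$. *)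

theory Defs
  imports Main "HOL-Combinatorics.Permutations"
begin

text \<open>Basis vectors v_{i_1} \<otimes> ... \<otimes> v_{i_r} are indexed by words of length r
  over the alphabet {1,2}.\<close>

definition words :: "nat \<Rightarrow> nat list set" where
  "words r = {w. length w = r \<and> set w \<subseteq> {1, 2}}"

definition nones :: "nat list \<Rightarrow> nat" where
  "nones w = length (filter (\<lambda>x. x = 1) w)"

text \<open>Operators on E^{\<otimes>r} as matrices w.r.t. the word basis:
  A w w' is the coefficient of v_w in A(v_{w'}); entries outside words r are 0.\<close>

definition mmul :: "nat \<Rightarrow> (nat list \<Rightarrow> nat list \<Rightarrow> 'a::comm_ring_1)
    \<Rightarrow> (nat list \<Rightarrow> nat list \<Rightarrow> 'a) \<Rightarrow> (nat list \<Rightarrow> nat list \<Rightarrow> 'a)" where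
  "mmul r A B = (\<lambda>w w''. if w \<in> words r \<and> w'' \<in> words r
      then (\<Sum>w'\<in>words r. A w w' * B w' w'') else 0)"

definition idm :: "nat \<Rightarrow> nat list \<Rightarrow> nat list \<Rightarrow> 'a::comm_ring_1" where
  "idm r = (\<lambda>w w'. if w \<in> words r \<and> w' = w then 1 else 0)"

primrec mpow :: "nat \<Rightarrow> (nat list \<Rightarrow> nat list \<Rightarrow> 'a::comm_ring_1) \<Rightarrow> nat
    \<Rightarrow> (nat list \<Rightarrow> nat list \<Rightarrow> 'a)" where
  "mpow r A 0 = idm r"
| "mpow r A (Suc n) = mmul r A (mpow r A n)"

text \<open>1_\<nu> for \<nu> = (k, r - k): projection of E^{\<otimes>r} onto M^\<nu>.\<close>
definition proj :: "nat \<Rightarrow> nat \<Rightarrow> nat list \<Rightarrow> nat list \<Rightarrow> 'a::comm_ring_1" where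
  "proj r k = (\<lambda>w w'. if w \<in> words r \<and> w' = w \<and> nones w = k then 1 else 0)"

text \<open>The integral operators e and f on E^{\<otimes>r} (acting as derivations, i.e. as
  \<Sum>_i 1\<otimes>..\<otimes>x\<otimes>..\<otimes>1).  Convention: e sends v_2 to v_1 and v_1 to 0,
  f sends v_1 to v_2 and v_2 to 0 (so that e^{(i)} raises and f^{(i)} lowers the
  number of v_1-factors).\<close>

definition change_one :: "nat \<Rightarrow> nat \<Rightarrow> nat list \<Rightarrow> nat list \<Rightarrow> bool" where
  "change_one a b w w' \<longleftrightarrow> length w = length w' \<and>
     (\<exists>i<length w'. w' ! i = a \<and> w = w'[i := b])"

definition e_int :: "nat \<Rightarrow> nat list \<Rightarrow> nat list \<Rightarrow> int" where
  "e_int r = (\<lambda>w w'. if w \<in> words r \<and> w' \<in> words r \<and> change_one 2 1 w w' then 1 else 0)"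

definition f_int :: "nat \<Rightarrow> nat list \<Rightarrow> nat list \<Rightarrow> int" where
  "f_int r = (\<lambda>w w'. if w \<in> words r \<and> w' \<in> words r \<and> change_one 1 2 w w' then 1 else 0)"

text \<open>Divided powers e^{(a)} = e^a / a!, f^{(a)} = f^a / a! (integral operators),
  reduced into the field via of_int.\<close>

definition dpe :: "nat \<Rightarrow> nat \<Rightarrow> nat list \<Rightarrow> nat list \<Rightarrow> 'a::comm_ring_1" where
  "dpe r a = (\<lambda>w w'. of_int (mpow r (e_int r) a w w' div fact a))"

definition dpf :: "nat \<Rightarrow> nat \<Rightarrow> nat list \<Rightarrow> nat list \<Rightarrow> 'a::comm_ring_1" where
  "dpf r a = (\<lambda>w w'. of_int (mpow r (f_int r) a w w' div fact a))"

definition bb :: "nat \<Rightarrow> nat \<Rightarrow> nat \<Rightarrow> nat list \<Rightarrow> nat list \<Rightarrow> 'a::comm_ring_1" where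
  "bb l1 l2 a = (if a \<le> l2 then
      mmul (l1 + l2) (proj (l1 + l2) l1)
        (mmul (l1 + l2) (dpf (l1 + l2) a) (mmul (l1 + l2) (dpe (l1 + l2) a) (proj (l1 + l2) l1)))
    else (\<lambda>_ _. 0))"

definition digit3 :: "nat \<Rightarrow> nat \<Rightarrow> nat" where
  "digit3 x u = x div 3 ^ u mod 3"

definition madd :: "(nat list \<Rightarrow> nat list \<Rightarrow> 'a::comm_ring_1) \<Rightarrow> (nat list \<Rightarrow> nat list \<Rightarrow> 'a)
    \<Rightarrow> (nat list \<Rightarrow> nat list \<Rightarrow> 'a)" where
  "madd A B = (\<lambda>w w'. A w w' + B w w')"

definition msub :: "(nat list \<Rightarrow> nat list \<Rightarrow> 'a::comm_ring_1) \<Rightarrow> (nat list \<Rightarrow> nat list \<Rightarrow> 'a)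
    \<Rightarrow> (nat list \<Rightarrow> nat list \<Rightarrow> 'a)" where
  "msub A B = (\<lambda>w w'. A w w' - B w w')"

text \<open>The cases not
  listed in the paper (g_u > (m+2g)_u) cannot occur when B(m,g) is nonzero mod 3
  (Lucas); there we put the neutral factor 1_\<lambda>.\<close>
definition emg_factor :: "nat \<Rightarrow> nat \<Rightarrow> nat \<Rightarrow> nat list \<Rightarrow> nat list \<Rightarrow> 'a::comm_ring_1" where
  "emg_factor m g u =
    (let a = digit3 (m + 2 * g) u; c = digit3 g u;
         I = proj (m + 2 * g) (m + g);
         B1 = bb (m + g) g (3 ^ u); B2 = bb (m + g) g (2 * 3 ^ u)
     in if c = 0 \<and> a = 0 then msub (madd I B1) B2
        else if c = 1 \<and> a = 2 then msub B2 B1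
        else if c = 0 \<and> a = 1 then msub I B2
        else if c = 2 \<and> a = 2 then B2
        else if c = 0 \<and> a = 2 then madd (msub I B1) B2
        else if c = 1 \<and> a = 1 then msub B1 B2
        else I)"

text \<open>e_{m,g}: product over all digit positions u; for u > m+2g every factor is
  1_\<lambda> + b(3^u) - b(2 3^u) = 1_\<lambda> (as 3^u > g), so the product is finite.\<close>
definition emg :: "nat \<Rightarrow> nat \<Rightarrow> nat list \<Rightarrow> nat list \<Rightarrow> 'a::comm_ring_1" where
  "emg m g = foldr (mmul (m + 2 * g)) (map (emg_factor m g) [0..<m + 2 * g + 1])
                (proj (m + 2 * g) (m + g))"

definition vecs :: "nat \<Rightarrow> (nat list \<Rightarrow> 'a::comm_ring_1) set" where
  "vecs r = {x. \<forall>w. w \<notin> words r \<longrightarrow> x w = 0}"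

definition mapply :: "nat \<Rightarrow> (nat list \<Rightarrow> nat list \<Rightarrow> 'a::comm_ring_1) \<Rightarrow> (nat list \<Rightarrow> 'a)
    \<Rightarrow> (nat list \<Rightarrow> 'a)" where
  "mapply r A x = (\<lambda>w. if w \<in> words r then (\<Sum>w'\<in>words r. A w w' * x w') else 0)"

definition permmod :: "nat \<Rightarrow> nat \<Rightarrow> (nat list \<Rightarrow> 'a::comm_ring_1) set" where
  "permmod r k = {x \<in> vecs r. \<forall>w. x w \<noteq> 0 \<longrightarrow> nones w = k}"

definition place_act :: "nat \<Rightarrow> (nat \<Rightarrow> nat) \<Rightarrow> (nat list \<Rightarrow> 'a::comm_ring_1) \<Rightarrow> (nat list \<Rightarrow> 'a)" where
  "place_act r \<sigma> x = (\<lambda>w. if w \<in> words r then x (map (\<lambda>i. w ! \<sigma> i) [0..<r]) else 0)"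

definition FSr_submodule :: "nat \<Rightarrow> (nat list \<Rightarrow> 'a::comm_ring_1) set \<Rightarrow> bool" where
  "FSr_submodule r X \<longleftrightarrow> X \<subseteq> vecs r \<and> (\<lambda>_. 0) \<in> X \<and>
     (\<forall>x\<in>X. \<forall>y\<in>X. (\<lambda>w. x w + y w) \<in> X) \<and>
     (\<forall>c. \<forall>x\<in>X. (\<lambda>w. c * x w) \<in> X) \<and>
     (\<forall>\<sigma>. \<sigma> permutes {..<r} \<longrightarrow> (\<forall>x\<in>X. place_act r \<sigma> x \<in> X))"

definition FSr_iso :: "nat \<Rightarrow> (nat list \<Rightarrow> 'a::comm_ring_1) set \<Rightarrow> (nat list \<Rightarrow> 'a) set \<Rightarrow> bool" where
  "FSr_iso r X Y \<longleftrightarrow> FSr_submodule r X \<and> FSr_submodule r Y \<and>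
     (\<exists>\<phi>. bij_betw \<phi> X Y \<and>
        (\<forall>x\<in>X. \<forall>y\<in>X. \<phi> (\<lambda>w. x w + y w) = (\<lambda>w. \<phi> x w + \<phi> y w)) \<and>
        (\<forall>c. \<forall>x\<in>X. \<phi> (\<lambda>w. c * x w) = (\<lambda>w. c * \<phi> x w)) \<and>
        (\<forall>\<sigma>. \<sigma> permutes {..<r} \<longrightarrow> (\<forall>x\<in>X. \<phi> (place_act r \<sigma> x) = place_act r \<sigma> (\<phi> x))))"

end

theory Submission
  imports Defs
begin

definition tw :: "nat list \<Rightarrow> nat set" where
  "tw w = {i. i < length w \<and> w ! i = 2}"

definition wd :: "nat \<Rightarrow> nat set \<Rightarrow> nat list" where
  "wd r A = map (\<lambda>i. if i \<in> A then 2 else 1) [0..<r]"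

lemma words_len: "w \<in> words r \<Longrightarrow> length w = r"
  by (simp add: words_def)

lemma words_nth: "w \<in> words r \<Longrightarrow> i < r \<Longrightarrow> w ! i = 1 \<or> w ! i = 2"
  unfolding words_def using nth_mem by fastforce

lemma wd_words: "wd r A \<in> words r"
  by (auto simp: wd_def words_def)

lemma tw_wd: "A \<subseteq> {..<r} \<Longrightarrow> tw (wd r A) = A"
  by (auto simp: tw_def wd_def split: if_splits)

lemma wd_tw: "w \<in> words r \<Longrightarrow> wd r (tw w) = w"
  apply (rule nth_equalityI)
   apply (simp add: wd_def words_len)
  subgoal for i
    using words_nth[of w r i] by (auto simp: wd_def tw_def words_len)
  done

lemma tw_sub: "w \<in> words r \<Longrightarrow> tw w \<subseteq> {..<r}"
  by (auto simp: tw_def words_len)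

lemma finite_tw[simp]: "finite (tw w)"
  by (auto simp: tw_def)

lemma tw_inj: "w \<in> words r \<Longrightarrow> w' \<in> words r \<Longrightarrow> tw w = tw w' \<Longrightarrow> w = w'"
  by (metis wd_tw)

lemma bij_tw: "bij_betw tw (words r) (Pow {..<r})"
proof (rule bij_betw_imageI)
  show "inj_on tw (words r)" by (meson inj_onI tw_inj)
  show "tw ` words r = Pow {..<r}"
  proof
    show "tw ` words r \<subseteq> Pow {..<r}" using tw_sub by auto
    show "Pow {..<r} \<subseteq> tw ` words r"
    proof
      fix A assume "A \<in> Pow {..<r}"
      then have "tw (wd r A) = A" by (simp add: tw_wd)
      then show "A \<in> tw ` words r" using wd_words by (metis image_eqI)
    qed
  qed
qed

lemma finite_words[simp]: "finite (words r)"
  using bij_betw_finite[OF bij_tw] by simp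

lemma card_tw_le: "w \<in> words r \<Longrightarrow> card (tw w) \<le> r"
  by (metis card_lessThan card_mono finite_lessThan tw_sub)

lemma nones_tw: "w \<in> words r \<Longrightarrow> nones w = r - card (tw w)"
proof -
  assume w: "w \<in> words r"
  have "nones w = card {i. i < length w \<and> w ! i = 1}"
    unfolding nones_def by (rule length_filter_conv_card)
  also have "{i. i < length w \<and> w ! i = 1} = {..<r} - tw w"
  proof (rule set_eqI)
    fix i show "i \<in> {i. i < length w \<and> w ! i = 1} \<longleftrightarrow> i \<in> {..<r} - tw w"
      using words_nth[OF w, of i] by (auto simp: tw_def words_len[OF w])
  qed
  also have "card \<dots> = r - card (tw w)"
    using tw_sub[OF w] by (simp add: card_Diff_subset)
  finally show ?thesis .
qed

lemma sum_words_tw: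
  "(\<Sum>w\<in>words r. h (tw w)) = (\<Sum>A\<in>Pow {..<r}. h A)"
  using sum.reindex_bij_betw[OF bij_tw, of h] by simp

lemma tw_upd: "i < length w \<Longrightarrow> x \<noteq> 2 \<Longrightarrow> tw (w[i := x]) = tw w - {i}"
  by (auto simp: tw_def nth_list_update)

lemma tw_upd2: "i < length w \<Longrightarrow> tw (w[i := 2]) = insert i (tw w)"
  by (auto simp: tw_def nth_list_update)

lemma upd_words: "w \<in> words r \<Longrightarrow> x \<in> {1,2} \<Longrightarrow> w[i := x] \<in> words r"
  unfolding words_def using set_update_subset_insert by fastforce

lemma change21:
  assumes w: "w \<in> words r" and w': "w' \<in> words r"
  shows "change_one 2 1 w w' \<longleftrightarrow> tw w \<subseteq> tw w' \<and> card (tw w' - tw w) = 1"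
proof
  assume "change_one 2 1 w w'"
  then obtain i where i: "i < length w'" "w' ! i = 2" "w = w'[i := 1]"
    unfolding change_one_def by auto
  then have t: "tw w = tw w' - {i}" by (simp add: tw_upd)
  moreover have "i \<in> tw w'" using i by (simp add: tw_def)
  ultimately have d: "tw w' - tw w = {i}" by blast
  have "tw w \<subseteq> tw w'" using t by blast
  then show "tw w \<subseteq> tw w' \<and> card (tw w' - tw w) = 1" using d by simp
next
  assume h: "tw w \<subseteq> tw w' \<and> card (tw w' - tw w) = 1"
  then obtain i where i: "tw w' - tw w = {i}" by (meson card_1_singletonE)
  then have iw: "i \<in> tw w'" by auto
  then have il: "i < length w'" "w' ! i = 2" by (auto simp: tw_def)
  have tweq: "tw w = tw (w'[i := 1])"
    using h i il by (auto simp: tw_upd)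
  have "w = w'[i := 1]"
    by (rule tw_inj[OF w upd_words[OF w'] tweq]) simp
  then show "change_one 2 1 w w'"
    unfolding change_one_def using il w w' by (auto simp: words_len)
qed

lemma change12:
  assumes w: "w \<in> words r" and w': "w' \<in> words r"
  shows "change_one 1 2 w w' \<longleftrightarrow> tw w' \<subseteq> tw w \<and> card (tw w - tw w') = 1"
proof
  assume "change_one 1 2 w w'"
  then obtain i where i: "i < length w'" "w' ! i = 1" "w = w'[i := 2]"
    unfolding change_one_def by auto
  then have "tw w = insert i (tw w')" by (simp add: tw_upd2)
  moreover have "i \<notin> tw w'" using i by (simp add: tw_def)
  ultimately have d: "tw w - tw w' = {i}" by blast
  have "tw w' \<subseteq> tw w" using \<open>tw w = insert i (tw w')\<close> by blast
  then show "tw w' \<subseteq> tw w \<and> card (tw w - tw w') = 1" using d by simp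
next
  assume h: "tw w' \<subseteq> tw w \<and> card (tw w - tw w') = 1"
  then obtain i where i: "tw w - tw w' = {i}" by (meson card_1_singletonE)
  then have iw: "i \<notin> tw w'" "i \<in> tw w" by auto
  then have il: "i < length w'" using tw_sub[OF w] words_len[OF w] words_len[OF w'] by auto
  then have il2: "w' ! i = 1" using iw words_nth[OF w'] words_len[OF w'] by (auto simp: tw_def)
  have tweq: "tw w = tw (w'[i := 2])"
    using h i il by (auto simp: tw_upd2)
  have "w = w'[i := 2]"
    by (rule tw_inj[OF w upd_words[OF w'] tweq]) simp
  then show "change_one 1 2 w w'"
    unfolding change_one_def using il il2 w w' by (auto simp: words_len)
qed

definition upc :: "nat set \<Rightarrow> nat set \<Rightarrow> nat \<Rightarrow> bool" where
  "upc X Y a \<longleftrightarrow> Y \<subseteq> X \<and> card (X - Y) = a"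

lemma e_int_eq: "e_int r w w' = (if w \<in> words r \<and> w' \<in> words r \<and> upc (tw w') (tw w) 1 then 1 else 0)"
  unfolding e_int_def upc_def using change21 by auto

lemma f_int_eq: "f_int r w w' = (if w \<in> words r \<and> w' \<in> words r \<and> upc (tw w) (tw w') 1 then 1 else 0)"
  unfolding f_int_def upc_def using change12 by auto

lemma card_interval_sets:
  assumes "finite X" "Y \<subseteq> X"
  shows "card {A. Y \<subseteq> A \<and> A \<subseteq> X \<and> card (A - Y) = b} = card (X - Y) choose b"
proof -
  have "bij_betw (\<lambda>A. A - Y) {A. Y \<subseteq> A \<and> A \<subseteq> X \<and> card (A - Y) = b} {D. D \<subseteq> X - Y \<and> card D = b}"
    unfolding bij_betw_def inj_on_def
  proof (intro conjI ballI impI)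
    fix A B assume "A \<in> {A. Y \<subseteq> A \<and> A \<subseteq> X \<and> card (A - Y) = b}" "B \<in> {A. Y \<subseteq> A \<and> A \<subseteq> X \<and> card (A - Y) = b}" "A - Y = B - Y"
    then show "A = B" by blast
  next
    show "(\<lambda>A. A - Y) ` {A. Y \<subseteq> A \<and> A \<subseteq> X \<and> card (A - Y) = b} = {D. D \<subseteq> X - Y \<and> card D = b}"
    proof (rule set_eqI, rule iffI)
      fix D assume "D \<in> {D. D \<subseteq> X - Y \<and> card D = b}"
      then have e: "D = (D \<union> Y) - Y" by blast
      have mem: "D \<union> Y \<in> {A. Y \<subseteq> A \<and> A \<subseteq> X \<and> card (A - Y) = b}" using assms \<open>D \<in> _\<close> e[symmetric] by auto
      show "D \<in> (\<lambda>A. A - Y) ` {A. Y \<subseteq> A \<and> A \<subseteq> X \<and> card (A - Y) = b}"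
        by (rule image_eqI[where x="D \<union> Y"]) (rule e, rule mem)
    qed auto
  qed
  then have "card {A. Y \<subseteq> A \<and> A \<subseteq> X \<and> card (A - Y) = b} = card {D. D \<subseteq> X - Y \<and> card D = b}"
    by (rule bij_betw_same_card)
  also have "\<dots> = card (X - Y) choose b" using assms by (simp add: n_subsets)
  finally show ?thesis .
qed

lemma card_diff_chain:
  assumes "finite X" "Y \<subseteq> A" "A \<subseteq> X"
  shows "card (X - Y) = card (X - A) + card (A - Y)"
proof -
  have "X - Y = (X - A) \<union> (A - Y)" "(X - A) \<inter> (A - Y) = {}" using assms by auto
  moreover have "finite (X - A)" "finite (A - Y)" using assms by (meson finite_Diff finite_subset)+
  ultimately show ?thesis using assms by (simp add: card_Un_disjoint)
qed

lemma sum_if_card: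
  "finite S \<Longrightarrow> (\<Sum>x\<in>S. if P x then c else 0) = of_nat (card {x\<in>S. P x}) * (c::'b::comm_semiring_1)"
  by (simp add: sum.If_cases Int_def)

lemma count_chain:
  assumes "finite X" "X \<subseteq> U"
  shows "card {A \<in> Pow U. Y \<subseteq> A \<and> A \<subseteq> X \<and> card (A - Y) = b \<and> card (X - A) = a}
     = (if Y \<subseteq> X \<and> card (X - Y) = a + b then (a + b) choose b else 0)"
proof (cases "Y \<subseteq> X \<and> card (X - Y) = a + b")
  case True
  have "{A \<in> Pow U. Y \<subseteq> A \<and> A \<subseteq> X \<and> card (A - Y) = b \<and> card (X - A) = a}
      = {A. Y \<subseteq> A \<and> A \<subseteq> X \<and> card (A - Y) = b}"
  proof (rule set_eqI, rule iffI)
    fix A assume "A \<in> {A. Y \<subseteq> A \<and> A \<subseteq> X \<and> card (A - Y) = b}"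
    then show "A \<in> {A \<in> Pow U. Y \<subseteq> A \<and> A \<subseteq> X \<and> card (A - Y) = b \<and> card (X - A) = a}"
      using card_diff_chain[of X Y A] True assms by auto
  qed auto
  then show ?thesis using card_interval_sets[of X Y b] True assms by simp
next
  case False
  have eq: "{A \<in> Pow U. Y \<subseteq> A \<and> A \<subseteq> X \<and> card (A - Y) = b \<and> card (X - A) = a} = {}"
  proof (rule ccontr)
    assume "\<not> ?thesis"
    then obtain A where "Y \<subseteq> A" "A \<subseteq> X" "card (A - Y) = b" "card (X - A) = a" by auto
    then show False using False card_diff_chain[of X Y A] assms by auto
  qed
  show ?thesis unfolding eq using False by simp
qed


lemma mpow_e:
  "mpow r (e_int r) a w w' = (if w \<in> words r \<and> w' \<in> words r \<and> upc (tw w') (tw w) a then fact a else 0)"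
proof (induction a arbitrary: w)
  case 0
  show ?case
  proof (cases "w \<in> words r \<and> w' \<in> words r")
    case True
    then have "upc (tw w') (tw w) 0 \<longleftrightarrow> w' = w"
      using tw_inj[of w r w'] by (auto simp: upc_def)
    then show ?thesis using True by (simp add: idm_def)
  qed (auto simp: idm_def)
next
  case (Suc a)
  show ?case
  proof (cases "w \<in> words r \<and> w' \<in> words r")
    case False then show ?thesis by (auto simp: mmul_def)
  next
    case True
    then have w: "w \<in> words r" and w': "w' \<in> words r" by auto
    let ?X = "tw w'" and ?Y = "tw w"
    have "mpow r (e_int r) (Suc a) w w' = (\<Sum>w''\<in>words r. e_int r w w'' * mpow r (e_int r) a w'' w')"
      using True by (simp add: mmul_def)
    also have "\<dots> = (\<Sum>w''\<in>words r. (\<lambda>A. if upc A ?Y 1 \<and> upc ?X A a then fact a else 0) (tw w''))"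
      using True by (intro sum.cong) (auto simp: e_int_eq Suc.IH)
    also have "\<dots> = (\<Sum>A\<in>Pow {..<r}. if upc A ?Y 1 \<and> upc ?X A a then fact a else 0)"
      by (rule sum_words_tw)
    also have "\<dots> = of_nat (card {A\<in>Pow {..<r}. upc A ?Y 1 \<and> upc ?X A a}) * fact a"
      by (simp add: sum_if_card)
    also have "{A\<in>Pow {..<r}. upc A ?Y 1 \<and> upc ?X A a} = {A\<in>Pow {..<r}. ?Y \<subseteq> A \<and> A \<subseteq> ?X \<and> card (A - ?Y) = 1 \<and> card (?X - A) = a}"
      by (auto simp: upc_def)
    also have "card \<dots> = (if upc ?X ?Y (Suc a) then Suc a else 0)"
      using count_chain[of ?X "{..<r}" ?Y 1 a] tw_sub[OF w'] by (simp add: upc_def)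
    finally show ?thesis using True by (simp add: fact_Suc)
  qed
qed

lemma mpow_f:
  "mpow r (f_int r) a w w' = (if w \<in> words r \<and> w' \<in> words r \<and> upc (tw w) (tw w') a then fact a else 0)"
proof (induction a arbitrary: w)
  case 0
  show ?case
  proof (cases "w \<in> words r \<and> w' \<in> words r")
    case True
    then have "upc (tw w) (tw w') 0 \<longleftrightarrow> w' = w"
      using tw_inj[of w r w'] by (auto simp: upc_def)
    then show ?thesis using True by (simp add: idm_def)
  qed (auto simp: idm_def)
next
  case (Suc a)
  show ?case
  proof (cases "w \<in> words r \<and> w' \<in> words r")
    case False then show ?thesis by (auto simp: mmul_def)
  next
    case True
    then have w: "w \<in> words r" and w': "w' \<in> words r" by auto
    let ?X = "tw w" and ?Y = "tw w'"
    have "mpow r (f_int r) (Suc a) w w' = (\<Sum>w''\<in>words r. f_int r w w'' * mpow r (f_int r) a w'' w')"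
      using True by (simp add: mmul_def)
    also have "\<dots> = (\<Sum>w''\<in>words r. (\<lambda>A. if upc ?X A 1 \<and> upc A ?Y a then fact a else 0) (tw w''))"
      using True by (intro sum.cong) (auto simp: f_int_eq Suc.IH)
    also have "\<dots> = (\<Sum>A\<in>Pow {..<r}. if upc ?X A 1 \<and> upc A ?Y a then fact a else 0)"
      by (rule sum_words_tw)
    also have "\<dots> = of_nat (card {A\<in>Pow {..<r}. upc ?X A 1 \<and> upc A ?Y a}) * fact a"
      by (simp add: sum_if_card)
    also have "{A\<in>Pow {..<r}. upc ?X A 1 \<and> upc A ?Y a} = {A\<in>Pow {..<r}. ?Y \<subseteq> A \<and> A \<subseteq> ?X \<and> card (A - ?Y) = a \<and> card (?X - A) = 1}"
      by (auto simp: upc_def)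
    also have "card \<dots> = (if upc ?X ?Y (Suc a) then Suc a else 0)"
      using count_chain[of ?X "{..<r}" ?Y a 1] tw_sub[OF w] by (simp add: upc_def)
    finally show ?thesis using True by (simp add: fact_Suc)
  qed
qed

lemma dpe_eq: "dpe r a w w' = (if w \<in> words r \<and> w' \<in> words r \<and> upc (tw w') (tw w) a then 1 else 0)"
  by (simp add: dpe_def mpow_e)

lemma dpf_eq: "dpf r a w w' = (if w \<in> words r \<and> w' \<in> words r \<and> upc (tw w) (tw w') a then 1 else 0)"
  by (simp add: dpf_def mpow_f)


lemma mmul_assoc: "mmul r (mmul r A B) C = mmul r A (mmul r B C)"
proof (rule ext, rule ext)
  fix w w''
  show "mmul r (mmul r A B) C w w'' = mmul r A (mmul r B C) w w''"
  proof (cases "w \<in> words r \<and> w'' \<in> words r")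
    case True
    have "mmul r (mmul r A B) C w w'' = (\<Sum>y\<in>words r. (\<Sum>x\<in>words r. A w x * B x y) * C y w'')"
      using True by (simp add: mmul_def)
    also have "\<dots> = (\<Sum>y\<in>words r. \<Sum>x\<in>words r. A w x * B x y * C y w'')"
      by (simp add: sum_distrib_right)
    also have "\<dots> = (\<Sum>x\<in>words r. \<Sum>y\<in>words r. A w x * B x y * C y w'')"
      by (rule sum.swap)
    also have "\<dots> = (\<Sum>x\<in>words r. A w x * (\<Sum>y\<in>words r. B x y * C y w''))"
      by (simp add: sum_distrib_left mult.assoc)
    also have "\<dots> = mmul r A (mmul r B C) w w''"
      using True by (simp add: mmul_def)
    finally show ?thesis .
  qed (auto simp: mmul_def)
qed

lemma mmul_proj_left:
  "mmul r (proj r k) A = (\<lambda>w w'. if w \<in> words r \<and> w' \<in> words r \<and> nones w = k then A w w' else 0)"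
proof (rule ext, rule ext)
  fix w w'
  show "mmul r (proj r k) A w w' = (if w \<in> words r \<and> w' \<in> words r \<and> nones w = k then A w w' else 0)"
  proof (cases "w \<in> words r \<and> w' \<in> words r")
    case True
    have "mmul r (proj r k) A w w' = (\<Sum>x\<in>words r. if x = w then (if nones w = k then A w w' else 0) else 0)"
      using True unfolding mmul_def proj_def
      apply (simp only: True if_True simp_thms)
      apply (rule sum.cong)
       apply auto
      done
    also have "\<dots> = (if nones w = k then A w w' else 0)"
      using True by (simp add: sum.delta')
    finally show ?thesis using True by simp
  qed (auto simp: mmul_def)
qed

lemma mmul_proj_right:
  "mmul r A (proj r k) = (\<lambda>w w'. if w \<in> words r \<and> w' \<in> words r \<and> nones w' = k then A w w' else 0)"
proof (rule ext, rule ext)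
  fix w w'
  show "mmul r A (proj r k) w w' = (if w \<in> words r \<and> w' \<in> words r \<and> nones w' = k then A w w' else 0)"
  proof (cases "w \<in> words r \<and> w' \<in> words r")
    case True
    have "mmul r A (proj r k) w w' = (\<Sum>x\<in>words r. if x = w' then (if nones w' = k then A w w' else 0) else 0)"
      using True unfolding mmul_def proj_def
      apply (simp only: True if_True simp_thms)
      apply (rule sum.cong)
       apply auto
      done
    also have "\<dots> = (if nones w' = k then A w w' else 0)"
      using True by (simp add: sum.delta')
    finally show ?thesis using True by simp
  qed (auto simp: mmul_def)
qed

lemma mmul_sum_left:
  "finite S \<Longrightarrow> mmul r (\<lambda>w w'. \<Sum>t\<in>S. c t * M t w w') B = (\<lambda>w w'. \<Sum>t\<in>S. c t * mmul r (M t) B w w')"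
  unfolding mmul_def
  by (intro ext) (auto simp: sum_distrib_right sum_distrib_left mult.assoc intro: sum.swap)

lemma mmul_sum_right:
  "finite S \<Longrightarrow> mmul r A (\<lambda>w w'. \<Sum>t\<in>S. c t * M t w w') = (\<lambda>w w'. \<Sum>t\<in>S. c t * mmul r A (M t) w w')"
  unfolding mmul_def
  by (intro ext) (auto simp: sum_distrib_right sum_distrib_left mult.left_commute intro: sum.swap)

lemma mmul_scal_left: "mmul r (\<lambda>w w'. c * M w w') B = (\<lambda>w w'. c * mmul r M B w w')"
  unfolding mmul_def by (intro ext) (auto simp: sum_distrib_left mult.assoc)

lemma mmul_scal_right: "mmul r A (\<lambda>w w'. c * M w w') = (\<lambda>w w'. c * mmul r A M w w')"
  unfolding mmul_def by (intro ext) (auto simp: sum_distrib_left mult.left_commute)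

lemma sum_words_ind:
  "(\<Sum>w''\<in>words r. if P (tw w'') then (1::'a::comm_ring_1) else 0) = of_nat (card {A\<in>Pow {..<r}. P A})"
  using sum_words_tw[of "\<lambda>A. if P A then (1::'a) else 0" r] by (simp add: sum_if_card)

lemma choose_swap: "(a + b) choose b = (a + b) choose (a::nat)"
  by (metis add_diff_cancel_right' binomial_symmetric le_add2 add.commute)

lemma ind_mult: "(if P then (1::'a::comm_ring_1) else 0) * (if Q then 1 else 0) = (if P \<and> Q then 1 else 0)"
  by simp

lemma ff: "mmul r (dpf r a) (dpf r b) = (\<lambda>w w'. of_nat ((a+b) choose a) * (dpf r (a+b) w w' :: 'a::comm_ring_1))"
proof (rule ext, rule ext)
  fix w w'
  show "mmul r (dpf r a) (dpf r b) w w' = of_nat ((a+b) choose a) * (dpf r (a+b) w w' :: 'a)"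
  proof (cases "w \<in> words r \<and> w' \<in> words r")
    case True
    have "mmul r (dpf r a) (dpf r b) w w' = (\<Sum>w''\<in>words r. if (\<lambda>A. upc (tw w) A a \<and> upc A (tw w') b) (tw w'') then (1::'a) else 0)"
      unfolding mmul_def dpf_eq
      apply (simp only: True if_True simp_thms)
      apply (rule sum.cong)
       apply (auto simp: True)
      done
    also have "\<dots> = of_nat (card {A\<in>Pow {..<r}. upc (tw w) A a \<and> upc A (tw w') b})"
      by (rule sum_words_ind)
    also have "{A\<in>Pow {..<r}. upc (tw w) A a \<and> upc A (tw w') b}
        = {A\<in>Pow {..<r}. tw w' \<subseteq> A \<and> A \<subseteq> tw w \<and> card (A - tw w') = b \<and> card (tw w - A) = a}"
      by (auto simp: upc_def)
    also have "card \<dots> = (if tw w' \<subseteq> tw w \<and> card (tw w - tw w') = a + b then (a+b) choose b else 0)"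
      using count_chain[of "tw w" "{..<r}" "tw w'" b a] tw_sub True by simp
    finally have eq: "mmul r (dpf r a) (dpf r b) w w' = (of_nat (if tw w' \<subseteq> tw w \<and> card (tw w - tw w') = a + b then (a+b) choose b else 0) :: 'a)" .
    show ?thesis using True unfolding eq by (auto simp: dpf_eq upc_def choose_swap)
  qed (auto simp: mmul_def dpf_eq)
qed

lemma ee: "mmul r (dpe r a) (dpe r b) = (\<lambda>w w'. of_nat ((a+b) choose a) * (dpe r (a+b) w w' :: 'a::comm_ring_1))"
proof (rule ext, rule ext)
  fix w w'
  show "mmul r (dpe r a) (dpe r b) w w' = of_nat ((a+b) choose a) * (dpe r (a+b) w w' :: 'a)"
  proof (cases "w \<in> words r \<and> w' \<in> words r")
    case True
    have "mmul r (dpe r a) (dpe r b) w w' = (\<Sum>w''\<in>words r. if (\<lambda>A. upc A (tw w) a \<and> upc (tw w') A b) (tw w'') then (1::'a) else 0)"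
      unfolding mmul_def dpe_eq
      apply (simp only: True if_True simp_thms)
      apply (rule sum.cong)
       apply (auto simp: True)
      done
    also have "\<dots> = of_nat (card {A\<in>Pow {..<r}. upc A (tw w) a \<and> upc (tw w') A b})"
      by (rule sum_words_ind)
    also have "{A\<in>Pow {..<r}. upc A (tw w) a \<and> upc (tw w') A b}
        = {A\<in>Pow {..<r}. tw w \<subseteq> A \<and> A \<subseteq> tw w' \<and> card (A - tw w) = a \<and> card (tw w' - A) = b}"
      by (auto simp: upc_def)
    also have "card \<dots> = (if tw w \<subseteq> tw w' \<and> card (tw w' - tw w) = b + a then (b+a) choose a else 0)"
      using count_chain[of "tw w'" "{..<r}" "tw w" a b] tw_sub True by simp
    finally have eq: "mmul r (dpe r a) (dpe r b) w w' = (of_nat (if tw w \<subseteq> tw w' \<and> card (tw w' - tw w) = b + a then (b+a) choose a else 0) :: 'a)" .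
    show ?thesis using True unfolding eq by (auto simp: dpe_eq upc_def choose_swap add.commute)
  qed (auto simp: mmul_def dpe_eq)
qed

lemma ef_entry: "mmul r (dpe r i) (dpf r j) w w' = (if w \<in> words r \<and> w' \<in> words r then
   of_nat (card {A\<in>Pow {..<r}. upc A (tw w) i \<and> upc A (tw w') j}) else (0::'a::comm_ring_1))"
proof (cases "w \<in> words r \<and> w' \<in> words r")
  case True
  have "mmul r (dpe r i) (dpf r j) w w' = (\<Sum>w''\<in>words r. if (\<lambda>A. upc A (tw w) i \<and> upc A (tw w') j) (tw w'') then (1::'a) else 0)"
    unfolding mmul_def dpe_eq dpf_eq
    apply (simp only: True if_True simp_thms)
    apply (rule sum.cong)
     apply (auto simp: True)
    done
  also have "\<dots> = of_nat (card {A\<in>Pow {..<r}. upc A (tw w) i \<and> upc A (tw w') j})"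
    by (rule sum_words_ind)
  finally show ?thesis using True by simp
qed (auto simp: mmul_def)

lemma fe_entry: "mmul r (dpf r p) (dpe r q) w w' = (if w \<in> words r \<and> w' \<in> words r then
   of_nat (card {A\<in>Pow {..<r}. upc (tw w) A p \<and> upc (tw w') A q}) else (0::'a::comm_ring_1))"
proof (cases "w \<in> words r \<and> w' \<in> words r")
  case True
  have "mmul r (dpf r p) (dpe r q) w w' = (\<Sum>w''\<in>words r. if (\<lambda>A. upc (tw w) A p \<and> upc (tw w') A q) (tw w'') then (1::'a) else 0)"
    unfolding mmul_def dpe_eq dpf_eq
    apply (simp only: True if_True simp_thms)
    apply (rule sum.cong)
     apply (auto simp: True)
    done
  also have "\<dots> = of_nat (card {A\<in>Pow {..<r}. upc (tw w) A p \<and> upc (tw w') A q})"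
    by (rule sum_words_ind)
  finally show ?thesis using True by simp
qed (auto simp: mmul_def)


lemma cnt_ef:
  assumes X: "X \<subseteq> {..<r}" and Z: "Z \<subseteq> {..<r}" and cX: "card X = s" and cZ: "card Z + i = s + j"
  shows "card {A\<in>Pow {..<r}. upc A Z i \<and> upc A X j}
     = (if card (X \<union> Z) \<le> s + j then (r - card (X \<union> Z)) choose (s + j - card (X \<union> Z)) else 0)"
proof -
  let ?Y = "X \<union> Z"
  have fX: "finite X" and fZ: "finite Z" using X Z finite_subset by auto
  have fY: "finite ?Y" using fX fZ by simp
  have key: "A \<in> {A\<in>Pow {..<r}. upc A Z i \<and> upc A X j} \<longleftrightarrow> A \<subseteq> {..<r} \<and> ?Y \<subseteq> A \<and> card A = s + j" for A
  proof
    assume "A \<in> {A\<in>Pow {..<r}. upc A Z i \<and> upc A X j}"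
    then have A: "A \<subseteq> {..<r}" "Z \<subseteq> A" "X \<subseteq> A" "card (A - Z) = i" "card (A - X) = j"
      by (auto simp: upc_def)
    have fA: "finite A" using A(1) finite_subset by auto
    have "card A - s = j" using A card_Diff_subset[OF fX A(3)] cX by simp
    moreover have "card X \<le> card A" using card_mono[OF fA A(3)] .
    ultimately show "A \<subseteq> {..<r} \<and> ?Y \<subseteq> A \<and> card A = s + j" using A cX by auto
  next
    assume A: "A \<subseteq> {..<r} \<and> ?Y \<subseteq> A \<and> card A = s + j"
    have fA: "finite A" using A finite_subset by auto
    have "card (A - X) = j" using A card_Diff_subset[OF fX] cX by auto
    moreover have "card (A - Z) = i" using A card_Diff_subset[OF fZ] cZ by auto
    ultimately show "A \<in> {A\<in>Pow {..<r}. upc A Z i \<and> upc A X j}" using A by (auto simp: upc_def)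
  qed
  show ?thesis
  proof (cases "card ?Y \<le> s + j")
    case True
    have "{A\<in>Pow {..<r}. upc A Z i \<and> upc A X j} = {A. ?Y \<subseteq> A \<and> A \<subseteq> {..<r} \<and> card (A - ?Y) = s + j - card ?Y}"
    proof (rule set_eqI)
      fix A
      show "A \<in> {A\<in>Pow {..<r}. upc A Z i \<and> upc A X j} \<longleftrightarrow> A \<in> {A. ?Y \<subseteq> A \<and> A \<subseteq> {..<r} \<and> card (A - ?Y) = s + j - card ?Y}"
      proof (cases "?Y \<subseteq> A \<and> A \<subseteq> {..<r}")
        case True2: True
        have fA: "finite A" using True2 finite_subset by auto
        have "card (A - ?Y) = card A - card ?Y" using card_Diff_subset[OF fY] True2 by auto
        moreover have "card ?Y \<le> card A" using card_mono[OF fA] True2 by auto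
        ultimately show ?thesis using key[of A] True2 True by auto
      next
        case False
        then show ?thesis using key[of A] by auto
      qed
    qed
    moreover have "card ({..<r} - ?Y) = r - card ?Y"
      using X Z card_Diff_subset[OF fY, of "{..<r}"] by simp
    ultimately show ?thesis using card_interval_sets[of "{..<r}" ?Y "s + j - card ?Y"] X Z True by simp
  next
    case False
    have "{A\<in>Pow {..<r}. upc A Z i \<and> upc A X j} = {}"
    proof (rule ccontr)
      assume "\<not> ?thesis"
      then obtain A where "A \<in> {A\<in>Pow {..<r}. upc A Z i \<and> upc A X j}" by blast
      then have A: "A \<subseteq> {..<r}" "?Y \<subseteq> A" "card A = s + j" using key by auto
      have "finite A" using A finite_subset by auto
      then have "card ?Y \<le> card A" using card_mono[of A ?Y] A by auto
      then show False using A False by simp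
    qed
    then show ?thesis using False by simp
  qed
qed

lemma cnt_ef0:
  assumes X: "X \<subseteq> {..<r}" and Z: "Z \<subseteq> {..<r}" and cX: "card X = s" and cZ: "card Z + i \<noteq> s + j"
  shows "card {A\<in>Pow {..<r}. upc A Z i \<and> upc A X j} = 0"
proof -
  have "{A\<in>Pow {..<r}. upc A Z i \<and> upc A X j} = {}"
  proof (rule ccontr)
    assume "\<not> ?thesis"
    then obtain A where A: "A \<subseteq> {..<r}" "Z \<subseteq> A" "X \<subseteq> A" "card (A - Z) = i" "card (A - X) = j"
      by (auto simp: upc_def)
    have fX: "finite X" and fZ: "finite Z" using X Z finite_subset by auto
    have fA: "finite A" using A(1) finite_subset by auto
    have "card A = s + j" using A card_Diff_subset[OF fX A(3)] cX card_mono[OF fA A(3)] by simp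
    moreover have "card A = card Z + i" using A card_Diff_subset[OF fZ A(2)] card_mono[OF fA A(2)] by simp
    ultimately show False using cZ by simp
  qed
  then show ?thesis by simp
qed

lemma cnt_fe:
  assumes X: "X \<subseteq> {..<r}" and Z: "Z \<subseteq> {..<r}" and cX: "card X = s"
  shows "card {A\<in>Pow {..<r}. upc Z A p \<and> upc X A q}
     = (if q \<le> s \<and> card Z + q = s + p then card (X \<inter> Z) choose (s - q) else 0)"
proof -
  have fX: "finite X" and fZ: "finite Z" using X Z finite_subset by auto
  have key: "A \<in> {A\<in>Pow {..<r}. upc Z A p \<and> upc X A q} \<longleftrightarrow> A \<subseteq> X \<inter> Z \<and> card Z - card A = p \<and> s - card A = q" for A
  proof (cases "A \<subseteq> X \<inter> Z")
    case True
    have fA: "finite A" using True fX finite_subset by blast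
    have "card (Z - A) = card Z - card A" using card_Diff_subset[OF fA] True by auto
    moreover have "card (X - A) = s - card A" using card_Diff_subset[OF fA] True cX by auto
    ultimately show ?thesis using True X by (auto simp: upc_def)
  next
    case False
    then show ?thesis by (auto simp: upc_def)
  qed
  show ?thesis
  proof (cases "q \<le> s \<and> card Z + q = s + p")
    case True
    have "{A\<in>Pow {..<r}. upc Z A p \<and> upc X A q} = {A. A \<subseteq> X \<inter> Z \<and> card A = s - q}"
    proof (rule set_eqI)
      fix A
      show "A \<in> {A\<in>Pow {..<r}. upc Z A p \<and> upc X A q} \<longleftrightarrow> A \<in> {A. A \<subseteq> X \<inter> Z \<and> card A = s - q}"
      proof (cases "A \<subseteq> X \<inter> Z")
        case True2: True
        have "card A \<le> s" using card_mono[OF fX] True2 cX by auto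
        then show ?thesis using key[of A] True2 True by auto
      next
        case False then show ?thesis using key[of A] by auto
      qed
    qed
    moreover have "card {A. A \<subseteq> X \<inter> Z \<and> card A = s - q} = card (X \<inter> Z) choose (s - q)"
      using fX by (intro n_subsets) simp
    ultimately show ?thesis using True by (simp only: if_True simp_thms)
  next
    case False
    have eq: "{A\<in>Pow {..<r}. upc Z A p \<and> upc X A q} = {}"
    proof (rule ccontr)
      assume "\<not> ?thesis"
      then obtain A where A: "A \<in> {A\<in>Pow {..<r}. upc Z A p \<and> upc X A q}" by blast
      then have A': "A \<subseteq> X \<inter> Z" "card Z - card A = p" "s - card A = q" using key by auto
      have "card A \<le> s" using card_mono[OF fX] A' cX by auto
      moreover have "card A \<le> card Z" using card_mono[OF fZ] A' by auto
      ultimately show False using A' False by auto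
    qed
    show ?thesis unfolding eq using False by auto
  qed
qed


lemma expansion:
  fixes G :: "nat \<Rightarrow> int"
  assumes "k0 \<le> K"
  shows "\<exists>d. d k0 = G k0 \<and> (\<forall>k\<in>{k0..K}. G k = (\<Sum>p\<in>{k0..K}. d p * of_nat (k choose p)))"
  using assms
proof (induction K rule: dec_induct)
  case base
  show ?case by (rule exI[of _ "\<lambda>_. G k0"]) simp
next
  case (step n)
  then obtain d where d: "d k0 = G k0" "\<forall>k\<in>{k0..n}. G k = (\<Sum>p\<in>{k0..n}. d p * of_nat (k choose p))" by blast
  define d' where "d' = d(Suc n := G (Suc n) - (\<Sum>p\<in>{k0..n}. d p * of_nat (Suc n choose p)))"
  have ins: "{k0..Suc n} = insert (Suc n) {k0..n}" using step(1) by auto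
  have fin: "Suc n \<notin> {k0..n}" by simp
  have sumd: "(\<Sum>p\<in>{k0..n}. d' p * of_nat (k choose p)) = (\<Sum>p\<in>{k0..n}. d p * of_nat (k choose p))" for k
    by (rule sum.cong) (auto simp: d'_def)
  have "\<forall>k\<in>{k0..Suc n}. G k = (\<Sum>p\<in>{k0..Suc n}. d' p * of_nat (k choose p))"
  proof
    fix k assume k: "k \<in> {k0..Suc n}"
    have e: "(\<Sum>p\<in>{k0..Suc n}. d' p * of_nat (k choose p)) = d' (Suc n) * of_nat (k choose Suc n) + (\<Sum>p\<in>{k0..n}. d p * of_nat (k choose p))"
      unfolding ins using sum.insert[OF finite_atLeastAtMost fin] sumd by simp
    show "G k = (\<Sum>p\<in>{k0..Suc n}. d' p * of_nat (k choose p))"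
    proof (cases "k = Suc n")
      case True
      then show ?thesis unfolding e by (simp add: d'_def)
    next
      case False
      then have "k \<in> {k0..n}" using k by auto
      then show ?thesis unfolding e using d(2) by simp
    qed
  qed
  moreover have "d' k0 = G k0" using d step(1) by (simp add: d'_def)
  ultimately show ?case by blast
qed

lemma ef_zero_cases:
  assumes w: "w \<in> words r" and w': "w' \<in> words r" and "card (tw w') = s"
    and "card (tw w) + i \<noteq> s + j"
  shows "mmul r (dpe r i) (dpf r j) w w' = (0::'a::comm_ring_1)"
proof -
  have c0: "card {A\<in>Pow {..<r}. upc A (tw w) i \<and> upc A (tw w') j} = 0"
    by (rule cnt_ef0[OF tw_sub[OF w'] tw_sub[OF w] assms(3,4)])
  show ?thesis by (simp only: ef_entry c0 of_nat_0 w w' simp_thms if_True)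
qed

lemma straighten:
  "\<exists>c::nat\<Rightarrow>int. (i \<le> s \<longrightarrow> c 0 = 1) \<and> (\<forall>w w'. w' \<in> words r \<longrightarrow> card (tw w') = s \<longrightarrow>
     mmul r (dpe r i) (dpf r j) w w' = (\<Sum>t\<le>min i j. of_int (c t) * (mmul r (dpf r (j - t)) (dpe r (i - t)) w w' :: 'a::comm_ring_1)))"
proof (cases "i \<le> s + j")
  case False
  show ?thesis
  proof (rule exI[of _ "\<lambda>_. 0"], intro conjI allI impI)
    show "i \<le> s \<Longrightarrow> (0::int) = 1" using False by simp
    fix w w' assume w': "w' \<in> words r" and cs: "card (tw w') = s"
    show "mmul r (dpe r i) (dpf r j) w w' = (\<Sum>t\<le>min i j. of_int 0 * (mmul r (dpf r (j - t)) (dpe r (i - t)) w w' :: 'a))"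
    proof (cases "w \<in> words r")
      case True
      show ?thesis using ef_zero_cases[OF True w' cs, of i j] False by simp
    qed (simp add: mmul_def)
  qed
next
  case True
  define k0 where "k0 = s - i"
  define K where "K = min s (s + j - i)"
  define F where "F k = (if s \<le> k + i then (r + k + i - (2*s + j)) choose (k + i - s) else 0)" for k
  have k0K: "k0 \<le> K" using True by (simp add: k0_def K_def)
  obtain d where d: "d k0 = int (F k0)" "\<forall>k\<in>{k0..K}. int (F k) = (\<Sum>p\<in>{k0..K}. d p * of_nat (k choose p))"
    using expansion[OF k0K, of "\<lambda>k. int (F k)"] by blast
  define c where "c t = d (s + t - i)" for t
  show ?thesis
  proof (rule exI[of _ c], intro conjI allI impI)
    assume "i \<le> s"
    then show "c 0 = 1" using d(1) by (simp add: c_def k0_def F_def)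
  next
    fix w w' assume w': "w' \<in> words r" and cs: "card (tw w') = s"
    show "mmul r (dpe r i) (dpf r j) w w' = (\<Sum>t\<le>min i j. of_int (c t) * (mmul r (dpf r (j - t)) (dpe r (i - t)) w w' :: 'a))"
    proof (cases "w \<in> words r")
      case False then show ?thesis by (simp add: mmul_def)
    next
      case w: True
      let ?X = "tw w'" and ?Z = "tw w"
      have X: "?X \<subseteq> {..<r}" and Z: "?Z \<subseteq> {..<r}" using tw_sub w w' by auto
      show ?thesis
      proof (cases "card ?Z + i = s + j")
        case False
        have "mmul r (dpf r (j - t)) (dpe r (i - t)) w w' = (0::'a)" if "t \<le> min i j" for t
        proof -
          have "\<not> (i - t \<le> s \<and> card ?Z + (i - t) = s + (j - t))" using that False by auto
          then have c0: "card {A\<in>Pow {..<r}. upc ?Z A (j - t) \<and> upc ?X A (i - t)} = 0"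
            using cnt_fe[OF X Z cs, of "j - t" "i - t"] by (simp only: if_False)
          show ?thesis by (simp only: fe_entry c0 of_nat_0 w w' simp_thms if_True)
        qed
        then show ?thesis using ef_zero_cases[OF w w' cs False] by simp
      next
        case cZ: True
        define k where "k = card (?X \<inter> ?Z)"
        have fX: "finite ?X" and fZ: "finite ?Z" by auto
        have un: "card (?X \<union> ?Z) + k = s + card ?Z"
          using card_Un_Int[OF fX fZ] cs by (simp add: k_def)
        have kle: "k \<le> s" "k \<le> card ?Z"
          using card_mono[OF fX, of "?X \<inter> ?Z"] card_mono[OF fZ, of "?X \<inter> ?Z"] cs by (auto simp: k_def)
        have Yle: "card (?X \<union> ?Z) \<le> r"
          using card_mono[of "{..<r}" "?X \<union> ?Z"] X Z by auto
        have lhs: "mmul r (dpe r i) (dpf r j) w w' = (of_nat (F k) :: 'a)"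
        proof -
          have "mmul r (dpe r i) (dpf r j) w w' = of_nat (if card (?X \<union> ?Z) \<le> s + j then (r - card (?X \<union> ?Z)) choose (s + j - card (?X \<union> ?Z)) else 0)"
            using cnt_ef[OF X Z cs cZ] w w' by (simp add: ef_entry del: card_eq_0_iff)
          also have "(if card (?X \<union> ?Z) \<le> s + j then (r - card (?X \<union> ?Z)) choose (s + j - card (?X \<union> ?Z)) else 0) = F k"
          proof -
            have "card (?X \<union> ?Z) \<le> s + j \<longleftrightarrow> s \<le> k + i" using un cZ by linarith
            moreover have "s \<le> k + i \<Longrightarrow> r - card (?X \<union> ?Z) = r + k + i - (2*s + j)" using un cZ Yle by linarith
            moreover have "s \<le> k + i \<Longrightarrow> s + j - card (?X \<union> ?Z) = k + i - s" using un cZ by linarith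
            ultimately show ?thesis by (simp add: F_def)
          qed
          finally show ?thesis .
        qed
        have rhs_t: "mmul r (dpf r (j - t)) (dpe r (i - t)) w w' = (of_nat (if i \<le> s + t then k choose (s + t - i) else 0) :: 'a)"
          if "t \<le> min i j" for t
        proof -
          have e1: "(i - t \<le> s \<and> card ?Z + (i - t) = s + (j - t)) \<longleftrightarrow> i \<le> s + t" using that cZ by auto
          have e2: "s - (i - t) = s + t - i" using that by auto
          have c: "card {A\<in>Pow {..<r}. upc ?Z A (j - t) \<and> upc ?X A (i - t)} = (if i \<le> s + t then k choose (s + t - i) else 0)"
          proof -
            have "card {A\<in>Pow {..<r}. upc ?Z A (j - t) \<and> upc ?X A (i - t)} = (if i - t \<le> s \<and> card ?Z + (i - t) = s + (j - t) then card (?X \<inter> ?Z) choose (s - (i - t)) else 0)"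
              by (rule cnt_fe[OF X Z cs])
            then show ?thesis by (simp only: e1 e2 k_def)
          qed
          show ?thesis by (simp only: fe_entry c w w' simp_thms if_True)
        qed
        have "(\<Sum>t\<le>min i j. of_int (c t) * (mmul r (dpf r (j - t)) (dpe r (i - t)) w w' :: 'a))
            = of_int (\<Sum>t\<le>min i j. c t * int (if i \<le> s + t then k choose (s + t - i) else 0))"
          using rhs_t by (simp add: of_int_sum)
        also have "(\<Sum>t\<le>min i j. c t * int (if i \<le> s + t then k choose (s + t - i) else 0))
            = (\<Sum>t\<in>{..min i j}. if i \<le> s + t then d (s + t - i) * int (k choose (s + t - i)) else 0)"
          by (rule sum.cong) (auto simp: c_def)
        also have "\<dots> = (\<Sum>t\<in>{t \<in> {..min i j}. i \<le> s + t}. d (s + t - i) * int (k choose (s + t - i)))"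
          by (rule sum.inter_filter[symmetric]) simp
        also have "\<dots> = (\<Sum>p\<in>{k0..K}. d p * int (k choose p))"
          apply (rule sum.reindex_bij_witness[of _ "\<lambda>p. p + i - s" "\<lambda>t. s + t - i"])
          using True by (auto simp: k0_def K_def)
        also have "\<dots> = int (F k)"
        proof (cases "k0 \<le> k")
          case True
          then show ?thesis using d(2) kle cZ by (auto simp: K_def)
        next
          case False
          then have "F k = 0" by (simp add: F_def k0_def)
          moreover have "(\<Sum>p\<in>{k0..K}. d p * int (k choose p)) = 0"
            using False by (intro sum.neutral) auto
          ultimately show ?thesis by simp
        qed
        finally show ?thesis using lhs by simp
      qed
    qed
  qed
qed


definition rowwt :: "nat \<Rightarrow> nat \<Rightarrow> (nat list \<Rightarrow> nat list \<Rightarrow> 'a::comm_ring_1) \<Rightarrow> bool" where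
  "rowwt r s M \<longleftrightarrow> (\<forall>w w'. M w w' \<noteq> 0 \<longrightarrow> w \<in> words r \<and> w' \<in> words r \<and> card (tw w) = s)"

lemma mmul_nz:
  assumes "mmul r A B w w' \<noteq> 0"
  shows "w \<in> words r \<and> w' \<in> words r \<and> (\<exists>x\<in>words r. A w x \<noteq> 0 \<and> B x w' \<noteq> 0)"
proof -
  have ww: "w \<in> words r \<and> w' \<in> words r" using assms by (auto simp: mmul_def split: if_splits)
  then have "(\<Sum>x\<in>words r. A w x * B x w') \<noteq> 0" using assms by (simp add: mmul_def)
  then obtain x where "x \<in> words r" "A w x * B x w' \<noteq> 0" by (meson sum.neutral)
  then show ?thesis using ww by (metis mult_zero_left mult_zero_right)
qed

lemma rowwt_dpe:
  assumes "rowwt r s M"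
  shows "rowwt r (s - a) (mmul r (dpe r a) M)"
  unfolding rowwt_def
proof (intro allI impI)
  fix w w' assume "mmul r (dpe r a) M w w' \<noteq> 0"
  from mmul_nz[OF this] obtain x where x: "x \<in> words r" "dpe r a w x \<noteq> (0::'a)" "M x w' \<noteq> 0"
    and ww: "w \<in> words r" "w' \<in> words r" by blast
  have "card (tw x) = s" using assms x by (auto simp: rowwt_def)
  moreover have "tw w \<subseteq> tw x" "card (tw x - tw w) = a" using x(2) by (auto simp: dpe_eq upc_def split: if_splits)
  ultimately have "card (tw w) = s - a"
    using card_Diff_subset[of "tw w" "tw x"] card_mono[of "tw x" "tw w"] by auto
  then show "w \<in> words r \<and> w' \<in> words r \<and> card (tw w) = s - a" using ww by simp
qed

lemma dpe_kill:
  assumes "rowwt r s M" "s < a"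
  shows "mmul r (dpe r a) M = (\<lambda>_ _. 0)"
proof (rule ext, rule ext, rule ccontr)
  fix w w' assume "mmul r (dpe r a) M w w' \<noteq> 0"
  from mmul_nz[OF this] obtain x where x: "x \<in> words r" "dpe r a w x \<noteq> (0::'a)" "M x w' \<noteq> 0" by blast
  have "card (tw x) = s" using assms x by (auto simp: rowwt_def)
  moreover have "tw w \<subseteq> tw x" "card (tw x - tw w) = a" using x(2) by (auto simp: dpe_eq upc_def split: if_splits)
  ultimately show False using assms(2) card_mono[of "tw x" "tw x - tw w"] by auto
qed

lemma rowwt_dpf:
  assumes "rowwt r s M"
  shows "rowwt r (s + a) (mmul r (dpf r a) M)"
  unfolding rowwt_def
proof (intro allI impI)
  fix w w' assume "mmul r (dpf r a) M w w' \<noteq> 0"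
  from mmul_nz[OF this] obtain x where x: "x \<in> words r" "dpf r a w x \<noteq> (0::'a)" "M x w' \<noteq> 0"
    and ww: "w \<in> words r" "w' \<in> words r" by blast
  have "card (tw x) = s" using assms x by (auto simp: rowwt_def)
  moreover have "tw x \<subseteq> tw w" "card (tw w - tw x) = a" using x(2) by (auto simp: dpf_eq upc_def split: if_splits)
  ultimately have "card (tw w) = s + a"
    using card_Diff_subset[of "tw x" "tw w"] card_mono[of "tw w" "tw x"] by auto
  then show "w \<in> words r \<and> w' \<in> words r \<and> card (tw w) = s + a" using ww by simp
qed

lemma nones_iff: "w \<in> words r \<Longrightarrow> s \<le> r \<Longrightarrow> nones w = r - s \<longleftrightarrow> card (tw w) = s"
  using nones_tw card_tw_le by fastforce

lemma proj_absorb: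
  assumes "rowwt r s M" "s \<le> r"
  shows "mmul r (proj r (r - s)) M = M"
proof (rule ext, rule ext)
  fix w w'
  show "mmul r (proj r (r - s)) M w w' = M w w'"
    unfolding mmul_proj_left using assms nones_iff[of w r s] by (auto simp: rowwt_def)
qed

lemma rowwt_proj: "s \<le> r \<Longrightarrow> rowwt r s (mmul r (proj r (r - s)) M)"
  unfolding rowwt_def mmul_proj_left using nones_iff by (auto split: if_splits)

lemma rowwt_projr: "s \<le> r \<Longrightarrow> rowwt r s (proj r (r - s) :: nat list \<Rightarrow> nat list \<Rightarrow> 'a::comm_ring_1)"
  unfolding rowwt_def proj_def using nones_iff by (auto split: if_splits)

lemma mmul_cong_rowwt:
  assumes "rowwt r s M" "\<And>w x. x \<in> words r \<Longrightarrow> card (tw x) = s \<Longrightarrow> A w x = B w x"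
  shows "mmul r A M = mmul r B M"
  unfolding mmul_def
proof (intro ext)
  fix w w'
  have "(\<Sum>x\<in>words r. A w x * M x w') = (\<Sum>x\<in>words r. B w x * M x w')"
  proof (rule sum.cong)
    fix x assume x: "x \<in> words r"
    show "A w x * M x w' = B w x * M x w'"
    proof (cases "M x w' = 0")
      case False
      then have "card (tw x) = s" using assms(1) by (auto simp: rowwt_def)
      then show ?thesis using assms(2)[OF x] by simp
    qed simp
  qed simp
  then show "(if w \<in> words r \<and> w' \<in> words r then \<Sum>x\<in>words r. A w x * M x w' else 0) =
             (if w \<in> words r \<and> w' \<in> words r then \<Sum>x\<in>words r. B w x * M x w' else 0)" by simp
qed

lemma mmul_zero_right: "mmul r A (\<lambda>_ _. 0) = (\<lambda>_ _. 0)"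
  by (intro ext) (simp add: mmul_def)

lemma mmul_zero_left: "mmul r (\<lambda>_ _. 0) A = (\<lambda>_ _. 0)"
  by (intro ext) (simp add: mmul_def)

definition bq :: "nat \<Rightarrow> nat \<Rightarrow> nat \<Rightarrow> nat list \<Rightarrow> nat list \<Rightarrow> 'a::comm_ring_1" where
  "bq r g a = mmul r (proj r (r - g)) (mmul r (dpf r a) (mmul r (dpe r a) (proj r (r - g))))"

lemma bq_zero:
  assumes "g \<le> r" "g < a"
  shows "bq r g a = (\<lambda>_ _. 0)"
proof -
  have "mmul r (dpe r a) (proj r (r - g)) = (\<lambda>_ _. (0::'a))"
    by (rule dpe_kill[OF rowwt_projr[OF assms(1)] assms(2)])
  then show ?thesis unfolding bq_def by (simp add: mmul_zero_right)
qed


lemma bprod: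
  assumes gr: "g \<le> r"
  shows "\<exists>c::nat\<Rightarrow>int. (i + j \<le> g \<longrightarrow> c 0 = 1) \<and> mmul r (bq r g i) (bq r g j) =
     (\<lambda>w w'. \<Sum>t\<le>min i j. of_int (c t) * of_nat (((i + j - t) choose i) * ((i + j - t) choose j)) * (bq r g (i + j - t) w w' :: 'a::comm_ring_1))"
proof (cases "j \<le> g")
  case False
  have "bq r g j = (\<lambda>_ _. (0::'a))" using False by (intro bq_zero[OF gr]) simp
  then show ?thesis using False by (intro exI[of _ "\<lambda>_. 0"]) (auto simp: mmul_zero_right)
next
  case True
  define s where "s = g - j"
  obtain c :: "nat \<Rightarrow> int" where c1: "i \<le> s \<longrightarrow> c 0 = 1"
    and c2: "\<forall>w w'. w' \<in> words r \<longrightarrow> card (tw w') = s \<longrightarrow>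
     mmul r (dpe r i) (dpf r j) w w' = (\<Sum>t\<le>min i j. of_int (c t) * (mmul r (dpf r (j - t)) (dpe r (i - t)) w w' :: 'a))"
    using straighten[of i s r j] by blast
  define P :: "nat list \<Rightarrow> nat list \<Rightarrow> 'a" where "P = proj r (r - g)"
  define Mj where "Mj = mmul r (dpe r j) P"
  define Nj where "Nj = mmul r (dpf r j) Mj"
  have rP: "rowwt r g P" unfolding P_def by (rule rowwt_projr[OF gr])
  have rM: "rowwt r s Mj" unfolding Mj_def s_def by (rule rowwt_dpe[OF rP])
  have rN: "rowwt r g Nj" unfolding Nj_def using rowwt_dpf[OF rM, of j] True by (simp add: s_def)
  have bj: "bq r g j = Nj" unfolding bq_def P_def[symmetric] Mj_def[symmetric] Nj_def[symmetric]
    by (rule proj_absorb[OF rN gr, unfolded P_def[symmetric]])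
  have "mmul r (bq r g i) (bq r g j) = mmul r (bq r g i) Nj" by (simp only: bj)
  also have "\<dots> = mmul r P (mmul r (dpf r i) (mmul r (dpe r i) (mmul r P Nj)))"
    unfolding bq_def P_def[symmetric] by (simp only: mmul_assoc)
  also have "\<dots> = mmul r P (mmul r (dpf r i) (mmul r (mmul r (dpe r i) (dpf r j)) Mj))"
    using proj_absorb[OF rN gr] unfolding P_def[symmetric] Nj_def by (simp only: mmul_assoc)
  also have "mmul r (mmul r (dpe r i) (dpf r j)) Mj
      = mmul r (\<lambda>w w'. \<Sum>t\<le>min i j. of_int (c t) * mmul r (dpf r (j - t)) (dpe r (i - t)) w w') Mj"
    by (rule mmul_cong_rowwt[OF rM]) (use c2 in auto)
  also have "\<dots> = (\<lambda>w w'. \<Sum>t\<le>min i j. of_int (c t) * mmul r (mmul r (dpf r (j - t)) (dpe r (i - t))) Mj w w')"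
    by (rule mmul_sum_left) simp
  also have "\<dots> = (\<lambda>w w'. \<Sum>t\<le>min i j. of_int (c t) * (of_nat ((i + j - t) choose j) * mmul r (dpf r (j - t)) (mmul r (dpe r (i + j - t)) P) w w'))"
  proof -
    have "mmul r (mmul r (dpf r (j - t)) (dpe r (i - t))) Mj = (\<lambda>w w'. of_nat ((i + j - t) choose j) * mmul r (dpf r (j - t)) (mmul r (dpe r (i + j - t)) P) w w')"
      if "t \<le> min i j" for t
    proof -
      have e1: "i - t + j = i + j - t" "(i + j - t) choose (i - t) = (i + j - t) choose j"
        using that choose_swap[of j "i - t"] by (auto simp: add.commute)
      have "mmul r (mmul r (dpf r (j - t)) (dpe r (i - t))) Mj = mmul r (dpf r (j - t)) (mmul r (mmul r (dpe r (i - t)) (dpe r j)) P)"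
        unfolding Mj_def by (simp only: mmul_assoc)
      also have "\<dots> = mmul r (dpf r (j - t)) (mmul r (\<lambda>w w'. of_nat ((i + j - t) choose j) * dpe r (i + j - t) w w') P)"
        unfolding ee e1(1) e1(2) ..
      finally show ?thesis by (simp only: mmul_scal_left mmul_scal_right)
    qed
    then show ?thesis by (intro ext sum.cong refl) (auto simp: fun_eq_iff)
  qed
  finally have "mmul r (bq r g i) (bq r g j) = mmul r P (mmul r (dpf r i)
     (\<lambda>w w'. \<Sum>t\<le>min i j. of_int (c t) * (of_nat ((i + j - t) choose j) * mmul r (dpf r (j - t)) (mmul r (dpe r (i + j - t)) P) w w')))" .
  also have "\<dots> = (\<lambda>w w'. \<Sum>t\<le>min i j. of_int (c t) * (of_nat ((i + j - t) choose j) * mmul r P (mmul r (mmul r (dpf r i) (dpf r (j - t))) (mmul r (dpe r (i + j - t)) P)) w w'))"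
    by (simp only: mmul_sum_right mmul_scal_right mmul_assoc finite_atMost)
  also have "\<dots> = (\<lambda>w w'. \<Sum>t\<le>min i j. of_int (c t) * of_nat (((i + j - t) choose i) * ((i + j - t) choose j)) * (bq r g (i + j - t) w w' :: 'a))"
  proof (intro ext sum.cong refl)
    fix w w' t assume t: "t \<in> {..min i j}"
    have e2: "i + (j - t) = i + j - t" using t by auto
    have "mmul r P (mmul r (mmul r (dpf r i) (dpf r (j - t))) (mmul r (dpe r (i + j - t)) P))
       = mmul r P (mmul r (\<lambda>w w'. of_nat ((i + j - t) choose i) * dpf r (i + j - t) w w') (mmul r (dpe r (i + j - t)) P))"
      unfolding ff e2 ..
    also have "\<dots> = (\<lambda>w w'. of_nat ((i + j - t) choose i) * bq r g (i + j - t) w w')"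
      unfolding bq_def P_def by (simp only: mmul_scal_left mmul_scal_right)
    finally show "of_int (c t) * (of_nat ((i + j - t) choose j) * mmul r P (mmul r (mmul r (dpf r i) (dpf r (j - t))) (mmul r (dpe r (i + j - t)) P)) w w')
        = of_int (c t) * of_nat (((i + j - t) choose i) * ((i + j - t) choose j)) * (bq r g (i + j - t) w w' :: 'a)"
      by (simp add: algebra_simps)
  qed
  finally show ?thesis using c1 by (intro exI[of _ c]) (auto simp: s_def)
qed


lemma char3_3: "CHAR('a::comm_ring_1) = 3 \<Longrightarrow> (3::'a) = 0"
  using of_nat_eq_0_iff_char_dvd[of 3, where 'a='a] by simp

lemma dm3: "b < 3 \<Longrightarrow> (3 * a + b) div 3 = (a::nat)" "b < 3 \<Longrightarrow> (3 * a + b) mod 3 = (b::nat)"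
  by auto

lemma lucas_step:
  assumes ch: "CHAR('a::comm_ring_1) = 3"
  shows "(of_nat (n choose k) :: 'a) = of_nat ((n div 3) choose (k div 3)) * of_nat ((n mod 3) choose (k mod 3))"
proof (induction n arbitrary: k)
  case 0
  show ?case
  proof (cases "k = 0")
    case False
    then have "k div 3 \<noteq> 0 \<or> k mod 3 \<noteq> 0" using div_mult_mod_eq[of k 3] by auto
    then show ?thesis using False by (auto simp: binomial_eq_0)
  qed simp
next
  case (Suc n)
  have h3: "(3::'a) = 0" by (rule char3_3[OF ch])
  show ?case
  proof (cases k)
    case 0
    then show ?thesis by simp
  next
    case (Suc k')
    have pas: "(of_nat (Suc n choose Suc k') :: 'a) = of_nat (n choose k') + of_nat (n choose Suc k')" by simp
    define a where "a = n div 3"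
    define b where "b = n mod 3"
    define c where "c = k' div 3"
    define e where "e = k' mod 3"
    have nab: "n = 3 * a + b" "b < 3" by (auto simp: a_def b_def)
    have kce: "k' = 3 * c + e" "e < 3" by (auto simp: c_def e_def)
    have IH1: "(of_nat (n choose k') :: 'a) = of_nat (a choose c) * of_nat (b choose e)"
      using Suc.IH[of k'] by (simp add: a_def b_def c_def e_def)
    have IH2: "(of_nat (n choose Suc k') :: 'a) = of_nat (a choose (Suc k' div 3)) * of_nat (b choose (Suc k' mod 3))"
      using Suc.IH[of "Suc k'"] by (simp add: a_def b_def)
    have L: "(of_nat (Suc n choose k) :: 'a) = of_nat (a choose c) * of_nat (b choose e) + of_nat (a choose (Suc k' div 3)) * of_nat (b choose (Suc k' mod 3))"
      using pas IH1 IH2 Suc by simp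
    have pa: "(of_nat (Suc a choose Suc c) :: 'a) = of_nat (a choose c) + of_nat (a choose Suc c)" by simp
    have b3: "b = 0 \<or> b = 1 \<or> b = 2" using nab by auto
    have e3: "e = 0 \<or> e = 1 \<or> e = 2" using kce by auto
    show ?thesis
    proof (cases "b = 2")
      case b2: True
      have sn: "Suc n = 3 * Suc a + 0" using nab b2 by simp
      show ?thesis
      proof (cases "e = 2")
        case e2: True
        have sk: "Suc k' = 3 * Suc c + 0" using kce e2 by simp
        show ?thesis apply (unfold L) unfolding Suc sn sk dm3[OF zero_less_numeral] using b2 e2 pa by simp
      next
        case False
        then have sk: "Suc k' = 3 * c + Suc e" "Suc e < 3" using kce e3 by auto
        have "(of_nat (a choose c) :: 'a) * of_nat (2 choose e) + of_nat (a choose c) * of_nat (2 choose Suc e) = of_nat (a choose c) * 3"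
          using False e3 by (auto simp: algebra_simps numeral_eq_Suc)
        note tri = this
        show ?thesis using tri apply (unfold L) unfolding Suc sn sk(1) dm3[OF zero_less_numeral] dm3[OF sk(2)] using b2 h3 by simp
      qed
    next
      case False
      then have sn: "Suc n = 3 * a + Suc b" "Suc b < 3" using nab b3 by auto
      show ?thesis
      proof (cases "e = 2")
        case e2: True
        have sk: "Suc k' = 3 * Suc c + 0" using kce e2 by simp
        have bz: "b choose 2 = 0" using False b3 by auto
        show ?thesis apply (unfold L) unfolding Suc sn(1) sk dm3[OF sn(2)] dm3[OF zero_less_numeral] using e2 apply (simp only: bz) by simp
      next
        case e2: False
        then have sk: "Suc k' = 3 * c + Suc e" "Suc e < 3" using kce e3 by auto
        show ?thesis apply (unfold L) unfolding Suc sn(1) sk(1) dm3[OF sn(2)] dm3[OF sk(2)]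
          by (simp add: algebra_simps)
      qed
    qed
  qed
qed


lemma lucas3:
  assumes ch: "CHAR('a::comm_ring_1) = 3" and "b < 3" "d < 3"
  shows "(of_nat ((3 * a + b) choose (3 * c + d)) :: 'a) = of_nat (a choose c) * of_nat (b choose d)"
  using lucas_step[OF ch, of "3 * a + b" "3 * c + d"] assms(2,3) by (simp only: dm3)

lemma lucas_pow:
  assumes ch: "CHAR('a::comm_ring_1) = 3"
  shows "B < 3 ^ n \<Longrightarrow> D < 3 ^ n \<Longrightarrow>
    (of_nat ((3 ^ n * A + B) choose (3 ^ n * C + D)) :: 'a) = of_nat (A choose C) * of_nat (B choose D)"
proof (induction n arbitrary: A B C D)
  case 0
  then show ?case by simp
next
  case (Suc n)
  define B1 where "B1 = B div 3 ^ n"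
  define B0 where "B0 = B mod 3 ^ n"
  define D1 where "D1 = D div 3 ^ n"
  define D0 where "D0 = D mod 3 ^ n"
  have B: "B = 3 ^ n * B1 + B0" "B0 < 3 ^ n" unfolding B1_def B0_def by simp_all
  have D: "D = 3 ^ n * D1 + D0" "D0 < 3 ^ n" unfolding D1_def D0_def by simp_all
  have B1: "B1 < 3" unfolding B1_def using Suc.prems(1) by (simp add: div_less_iff_less_mult mult.commute)
  have D1: "D1 < 3" unfolding D1_def using Suc.prems(2) by (simp add: div_less_iff_less_mult mult.commute)
  have e1: "3 ^ Suc n * A + B = 3 ^ n * (3 * A + B1) + B0" using B by (simp add: algebra_simps)
  have e2: "3 ^ Suc n * C + D = 3 ^ n * (3 * C + D1) + D0" using D by (simp add: algebra_simps)
  have "(of_nat ((3 ^ Suc n * A + B) choose (3 ^ Suc n * C + D)) :: 'a)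
      = of_nat ((3 * A + B1) choose (3 * C + D1)) * of_nat (B0 choose D0)"
    unfolding e1 e2 using Suc.IH B(2) D(2) by blast
  also have "\<dots> = of_nat (A choose C) * of_nat (B1 choose D1) * of_nat (B0 choose D0)"
    using lucas3[OF ch B1 D1] by simp
  also have "(of_nat (B choose D) :: 'a) = of_nat (B1 choose D1) * of_nat (B0 choose D0)"
    using Suc.IH[OF B(2) D(2), of B1 D1] B(1) D(1) by simp
  ultimately show ?case by (simp add: algebra_simps)
qed

lemma digit3_Suc: "digit3 (n div 3) u = digit3 n (Suc u)"
  by (simp add: digit3_def div_mult2_eq)

lemma digit3_0: "digit3 n 0 = n mod 3"
  by (simp add: digit3_def)

lemma lucas_digits:
  assumes ch: "CHAR('a::comm_ring_1) = 3"
  shows "n < 3 ^ N \<Longrightarrow> k < 3 ^ N \<Longrightarrow>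
    (of_nat (n choose k) :: 'a) = (\<Prod>u<N. of_nat (digit3 n u choose digit3 k u))"
proof (induction N arbitrary: n k)
  case 0
  then show ?case by simp
next
  case (Suc N)
  have "n div 3 < 3 ^ N" "k div 3 < 3 ^ N" using Suc.prems by (simp_all add: div_less_iff_less_mult)
  then have "(of_nat (n div 3 choose k div 3) :: 'a) = (\<Prod>u<N. of_nat (digit3 n (Suc u) choose digit3 k (Suc u)))"
    using Suc.IH by (simp add: digit3_Suc)
  moreover have "(\<Prod>u<Suc N. (of_nat (digit3 n u choose digit3 k u) :: 'a))
     = of_nat (digit3 n 0 choose digit3 k 0) * (\<Prod>u<N. of_nat (digit3 n (Suc u) choose digit3 k (Suc u)))"
    by (rule prod.lessThan_Suc_shift)
  ultimately show ?case
    using lucas_step[OF ch, of n k] by (simp only: digit3_0 mult.commute)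
qed

lemma coef_one:
  assumes ch: "CHAR('a::comm_ring_1) = 3" and d: "d < 3"
  shows "(of_nat (((d * 3 ^ u + 3 ^ Suc u * x) choose (d * 3 ^ u)) * ((d * 3 ^ u + 3 ^ Suc u * x) choose (3 ^ Suc u * x))) :: 'a) = 1"
proof -
  have i: "d * 3 ^ u < 3 ^ Suc u" using d by simp
  have "(of_nat ((3 ^ Suc u * x + d * 3 ^ u) choose (3 ^ Suc u * 0 + d * 3 ^ u)) :: 'a) = 1"
    using lucas_pow[OF ch i i, of x 0] by simp
  moreover have "(of_nat ((3 ^ Suc u * x + d * 3 ^ u) choose (3 ^ Suc u * x + 0)) :: 'a) = 1"
    using lucas_pow[OF ch i, of 0 x x] by simp
  ultimately show ?thesis by (simp add: add.commute)
qed

lemma coef_zero: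
  assumes ch: "CHAR('a::comm_ring_1) = 3" and d: "d < 3" and t: "1 \<le> t" "t \<le> d * 3 ^ u"
  shows "(of_nat (((d * 3 ^ u + 3 ^ Suc u * x - t) choose (d * 3 ^ u)) * ((d * 3 ^ u + 3 ^ Suc u * x - t) choose (3 ^ Suc u * x))) :: 'a) = 0"
proof -
  have i: "d * 3 ^ u < 3 ^ Suc u" using d by simp
  have it: "d * 3 ^ u - t < 3 ^ Suc u" using i by (meson diff_le_self le_less_trans)
  have e: "d * 3 ^ u + 3 ^ Suc u * x - t = 3 ^ Suc u * x + (d * 3 ^ u - t)" using t by simp
  have "(of_nat ((3 ^ Suc u * x + (d * 3 ^ u - t)) choose (3 ^ Suc u * 0 + d * 3 ^ u)) :: 'a)
      = of_nat (x choose 0) * of_nat ((d * 3 ^ u - t) choose (d * 3 ^ u))"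
    by (rule lucas_pow[OF ch it i])
  also have "(d * 3 ^ u - t) choose (d * 3 ^ u) = 0" using t by (simp add: binomial_eq_0)
  finally show ?thesis unfolding e by simp
qed


lemma bmul_digit:
  assumes ch: "CHAR('a::comm_ring_1) = 3" and gr: "g \<le> r" and d: "d < 3"
  shows "mmul r (bq r g (d * 3 ^ u)) (bq r g (3 ^ Suc u * x)) = (bq r g (d * 3 ^ u + 3 ^ Suc u * x) :: nat list \<Rightarrow> nat list \<Rightarrow> 'a)"
proof -
  let ?i = "d * 3 ^ u" and ?j = "3 ^ Suc u * x"
  obtain c :: "nat \<Rightarrow> int" where c1: "?i + ?j \<le> g \<longrightarrow> c 0 = 1"
    and c2: "mmul r (bq r g ?i) (bq r g ?j) =
     (\<lambda>w w'. \<Sum>t\<le>min ?i ?j. of_int (c t) * of_nat (((?i + ?j - t) choose ?i) * ((?i + ?j - t) choose ?j)) * (bq r g (?i + ?j - t) w w' :: 'a))"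
    using bprod[OF gr, of ?i ?j] by blast
  show ?thesis
  proof (rule ext, rule ext)
    fix w w'
    have "(\<Sum>t\<le>min ?i ?j. of_int (c t) * of_nat (((?i + ?j - t) choose ?i) * ((?i + ?j - t) choose ?j)) * (bq r g (?i + ?j - t) w w' :: 'a))
        = (\<Sum>t\<le>min ?i ?j. if t = 0 then of_int (c 0) * bq r g (?i + ?j) w w' else 0)"
    proof (rule sum.cong)
      fix t assume t: "t \<in> {..min ?i ?j}"
      show "of_int (c t) * of_nat (((?i + ?j - t) choose ?i) * ((?i + ?j - t) choose ?j)) * (bq r g (?i + ?j - t) w w' :: 'a)
          = (if t = 0 then of_int (c 0) * bq r g (?i + ?j) w w' else 0)"
      proof (cases "t = 0")
        case True
        then show ?thesis using coef_one[OF ch d, of u x] by simp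
      next
        case False
        then have "1 \<le> t" "t \<le> ?i" using t by auto
        then show ?thesis using coef_zero[OF ch d, of t u x] False by simp
      qed
    qed simp
    also have "\<dots> = of_int (c 0) * bq r g (?i + ?j) w w'" by simp
    also have "\<dots> = bq r g (?i + ?j) w w'"
    proof (cases "?i + ?j \<le> g")
      case True then show ?thesis using c1 by simp
    next
      case False
      have z: "bq r g (?i + ?j) = (\<lambda>_ _. (0::'a))" using False by (intro bq_zero[OF gr]) simp
      show ?thesis by (simp only: z) simp
    qed
    finally have X: "(\<Sum>t\<le>min ?i ?j. of_int (c t) * of_nat (((?i + ?j - t) choose ?i) * ((?i + ?j - t) choose ?j)) * (bq r g (?i + ?j - t) w w' :: 'a)) = bq r g (?i + ?j) w w'" .
    have Y: "mmul r (bq r g ?i) (bq r g ?j) w w' = (\<Sum>t\<le>min ?i ?j. of_int (c t) * of_nat (((?i + ?j - t) choose ?i) * ((?i + ?j - t) choose ?j)) * (bq r g (?i + ?j - t) w w' :: 'a))"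
      by (subst c2) (rule refl)
    show "mmul r (bq r g ?i) (bq r g ?j) w w' = (bq r g (?i + ?j) w w' :: 'a)" using X Y by simp
  qed
qed


lemma dpf0_eq: "dpf r 0 w x = (if w \<in> words r \<and> x = w then 1 else 0)"
  unfolding dpf_eq upc_def using tw_inj[of w r x] by auto

lemma dpe0_eq: "dpe r 0 w x = (if w \<in> words r \<and> x = w then 1 else 0)"
  unfolding dpe_eq upc_def using tw_inj[of w r x] by auto

lemma dp0_left_gen:
  assumes "\<And>w x. D w x = (if w \<in> words r \<and> x = w then 1 else 0)"
  shows "mmul r D M = (\<lambda>w w'. if w \<in> words r \<and> w' \<in> words r then M w w' else (0::'a::comm_ring_1))"
proof (rule ext, rule ext)
  fix w w'
  show "mmul r D M w w' = (if w \<in> words r \<and> w' \<in> words r then M w w' else 0)"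
  proof (cases "w \<in> words r \<and> w' \<in> words r")
    case True
    have "mmul r D M w w' = (\<Sum>x\<in>words r. if x = w then M w w' else 0)"
      unfolding mmul_def assms
      apply (simp only: True if_True simp_thms)
      apply (rule sum.cong)
       apply (auto simp: True)
      done
    also have "\<dots> = M w w'" using True by (simp add: sum.delta')
    finally show ?thesis using True by simp
  qed (auto simp: mmul_def)
qed

lemma dp0_left:
  "mmul r (dpf r 0) M = (\<lambda>w w'. if w \<in> words r \<and> w' \<in> words r then M w w' else 0)"
  "mmul r (dpe r 0) M = (\<lambda>w w'. if w \<in> words r \<and> w' \<in> words r then M w w' else 0)"
  by (rule dp0_left_gen, rule dpf0_eq) (rule dp0_left_gen, rule dpe0_eq)

lemma bq0: "g \<le> r \<Longrightarrow> bq r g 0 = proj r (r - g)"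
  unfolding bq_def dp0_left mmul_proj_left
  by (intro ext) (auto simp: proj_def)

lemma bb_bq: "bb (m + g) g a = (bq (m + 2 * g) g a :: nat list \<Rightarrow> nat list \<Rightarrow> 'a::comm_ring_1)"
proof (cases "a \<le> g")
  case True
  have e: "m + g + g = m + 2 * g" "m + 2 * g - g = m + g" by simp_all
  show ?thesis unfolding bb_def bq_def e using True by simp
next
  case False
  then have "bq (m + 2 * g) g a = (\<lambda>_ _. (0::'a::comm_ring_1))" by (intro bq_zero) simp_all
  then show ?thesis unfolding bb_def using False by simp
qed

definition phi :: "nat \<Rightarrow> nat \<Rightarrow> nat \<Rightarrow> 'a::comm_ring_1" where
  "phi c a d = (if c = 0 \<and> a = 0 then (if d = 0 then 1 else if d = 1 then 1 else -1)
   else if c = 1 \<and> a = 2 then (if d = 0 then 0 else if d = 1 then -1 else 1)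
   else if c = 0 \<and> a = 1 then (if d = 0 then 1 else if d = 1 then 0 else -1)
   else if c = 2 \<and> a = 2 then (if d = 2 then 1 else 0)
   else if c = 0 \<and> a = 2 then (if d = 0 then 1 else if d = 1 then -1 else 1)
   else if c = 1 \<and> a = 1 then (if d = 0 then 0 else if d = 1 then 1 else -1)
   else (if d = 0 then 1 else 0))"

lemma sum3: "(\<Sum>d<(3::nat). f d) = f 0 + f 1 + (f 2 :: 'a::comm_monoid_add)"
proof -
  have "{..<(3::nat)} = {0, 1, 2}" by auto
  then show ?thesis by (simp add: add.assoc)
qed

lemma factor_eq:
  "emg_factor m g u = (\<lambda>w w'. \<Sum>d<3. phi (digit3 g u) (digit3 (m + 2 * g) u) d * (bq (m + 2 * g) g (d * 3 ^ u) w w' :: 'a::comm_ring_1))"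
proof -
  have I: "proj (m + 2 * g) (m + g) = (bq (m + 2 * g) g 0 :: nat list \<Rightarrow> nat list \<Rightarrow> 'a::comm_ring_1)"
    using bq0[of g "m + 2 * g", where 'a='a] by (simp add: add.commute)
  show ?thesis
    unfolding emg_factor_def Let_def bb_bq I sum3
    by (intro ext) (auto simp: phi_def madd_def msub_def)
qed


definition Phi :: "nat \<Rightarrow> nat \<Rightarrow> nat \<Rightarrow> nat \<Rightarrow> nat \<Rightarrow> 'a::comm_ring_1" where
  "Phi m g k M i = (\<Prod>v<M. phi (digit3 g (k + v)) (digit3 (m + 2 * g) (k + v)) (digit3 i v))"

lemma sum_split3:
  fixes h :: "nat \<Rightarrow> 'a::comm_monoid_add"
  shows "(\<Sum>i<3 ^ Suc M. h i) = (\<Sum>d<3. \<Sum>i<3 ^ M. h (d + 3 * i))"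
proof -
  have "(\<Sum>d<3. \<Sum>i<3 ^ M. h (d + 3 * i)) = (\<Sum>p\<in>{..<3} \<times> {..<3 ^ M}. h (fst p + 3 * snd p))"
    by (simp add: sum.cartesian_product split_def)
  also have "\<dots> = (\<Sum>i<3 ^ Suc M. h i)"
    by (rule sum.reindex_bij_witness[of _ "\<lambda>i. (i mod 3, i div 3)" "\<lambda>p. fst p + 3 * snd p"])
       (auto simp: less_mult_imp_div_less div_less_iff_less_mult)
  finally show ?thesis by simp
qed

lemma digit3_lowadd: "d < 3 \<Longrightarrow> digit3 (d + 3 * i) 0 = d"
  by (simp add: digit3_def)

lemma digit3_shift: "d < 3 \<Longrightarrow> digit3 (d + 3 * i) (Suc v) = digit3 i v"
proof -
  assume "d < 3"
  then have "(d + 3 * i) div 3 = i" by simp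
  then show ?thesis using digit3_Suc[of "d + 3 * i" v] by simp
qed

lemma Phi_step:
  "d < 3 \<Longrightarrow> (Phi m g k (Suc M) (d + 3 * i) :: 'a::comm_ring_1)
     = phi (digit3 g k) (digit3 (m + 2 * g) k) d * Phi m g (Suc k) M i"
  unfolding Phi_def
  by (subst prod.lessThan_Suc_shift) (simp add: digit3_lowadd digit3_shift)

lemma foldr_exp:
  assumes ch: "CHAR('a::comm_ring_1) = 3"
  shows "k + M = N \<Longrightarrow> foldr (mmul (m + 2 * g)) (map (emg_factor m g) [k..<N]) (proj (m + 2 * g) (m + g))
    = (\<lambda>w w'. \<Sum>i<3 ^ M. Phi m g k M i * (bq (m + 2 * g) g (3 ^ k * i) w w' :: 'a))"
proof (induction M arbitrary: k)
  case 0
  have I: "proj (m + 2 * g) (m + g) = (bq (m + 2 * g) g 0 :: nat list \<Rightarrow> nat list \<Rightarrow> 'a)"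
    using bq0[of g "m + 2 * g", where 'a='a] by (simp add: add.commute)
  show ?case using 0 by (simp add: I Phi_def)
next
  case (Suc M)
  let ?r = "m + 2 * g"
  have gr: "g \<le> ?r" by simp
  have upt: "[k..<N] = k # [Suc k..<N]" using Suc.prems by (simp add: upt_conv_Cons)
  have IH: "foldr (mmul ?r) (map (emg_factor m g) [Suc k..<N]) (proj ?r (m + g))
    = (\<lambda>w w'. \<Sum>i<3 ^ M. Phi m g (Suc k) M i * (bq ?r g (3 ^ Suc k * i) w w' :: 'a))"
    using Suc.IH[of "Suc k"] Suc.prems by simp
  have "foldr (mmul ?r) (map (emg_factor m g) [k..<N]) (proj ?r (m + g))
      = mmul ?r (\<lambda>w w'. \<Sum>d<3. phi (digit3 g k) (digit3 ?r k) d * (bq ?r g (d * 3 ^ k) w w' :: 'a))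
          (\<lambda>w w'. \<Sum>i<3 ^ M. Phi m g (Suc k) M i * (bq ?r g (3 ^ Suc k * i) w w' :: 'a))"
    unfolding upt by (simp add: IH factor_eq)
  also have "\<dots> = (\<lambda>w w'. \<Sum>d<3. phi (digit3 g k) (digit3 ?r k) d * (\<Sum>i<3 ^ M. Phi m g (Suc k) M i *
        mmul ?r (bq ?r g (d * 3 ^ k)) (bq ?r g (3 ^ Suc k * i)) w w'))"
    by (simp add: mmul_sum_left mmul_sum_right)
  also have "\<dots> = (\<lambda>w w'. \<Sum>d<3. \<Sum>i<3 ^ M. phi (digit3 g k) (digit3 ?r k) d * Phi m g (Suc k) M i *
        (bq ?r g (3 ^ k * (d + 3 * i)) w w' :: 'a))"
  proof (intro ext sum.cong refl)
    fix w w' d assume d: "d \<in> {..<3::nat}"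
    have e: "3 ^ k * (d + 3 * i) = d * 3 ^ k + 3 ^ Suc k * i" for i by (simp add: algebra_simps)
    show "phi (digit3 g k) (digit3 ?r k) d * (\<Sum>i<3 ^ M. Phi m g (Suc k) M i * mmul ?r (bq ?r g (d * 3 ^ k)) (bq ?r g (3 ^ Suc k * i)) w w')
        = (\<Sum>i<3 ^ M. phi (digit3 g k) (digit3 ?r k) d * Phi m g (Suc k) M i * (bq ?r g (3 ^ k * (d + 3 * i)) w w' :: 'a))"
      unfolding e using bmul_digit[OF ch gr, of d k] d by (simp add: sum_distrib_left mult.assoc)
  qed
  also have "\<dots> = (\<lambda>w w'. \<Sum>i<3 ^ Suc M. Phi m g k (Suc M) i * (bq ?r g (3 ^ k * i) w w' :: 'a))"
  proof (intro ext)
    fix w w'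
    show "(\<Sum>d<3. \<Sum>i<3 ^ M. phi (digit3 g k) (digit3 ?r k) d * Phi m g (Suc k) M i * (bq ?r g (3 ^ k * (d + 3 * i)) w w' :: 'a))
        = (\<Sum>i<3 ^ Suc M. Phi m g k (Suc M) i * (bq ?r g (3 ^ k * i) w w' :: 'a))"
      unfolding sum_split3 by (intro sum.cong refl) (simp add: Phi_step)
  qed
  finally show ?case .
qed


lemma phi_low: "c \<le> a \<Longrightarrow> a < 3 \<Longrightarrow> d < c \<Longrightarrow> phi c a d = 0"
  by (auto simp: phi_def)

lemma phi_diag:
  assumes ch: "CHAR('a::comm_ring_1) = 3" and "c \<le> a" "a < 3"
  shows "(phi c a c :: 'a) = of_nat (a choose c)"
proof -
  have h3: "(3::'a) = 0" by (rule char3_3[OF ch])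
  have m1: "(-1::'a) = 2" using h3 by (simp add: eq_neg_iff_add_eq_0)
  have "a = 0 \<or> a = 1 \<or> a = 2" "c = 0 \<or> c = 1 \<or> c = 2" using assms by auto
  then show ?thesis using assms(2) by (auto simp: phi_def m1 numeral_eq_Suc)
qed

lemma pow3_gt: "n < (3::nat) ^ n"
  by (induction n) auto

lemma dominance:
  "(\<forall>v<N. digit3 g v \<le> digit3 i v) \<Longrightarrow> g < 3 ^ N \<Longrightarrow> g \<le> i"
proof (induction N arbitrary: g i)
  case 0
  then show ?case by simp
next
  case (Suc N)
  have "\<forall>v<N. digit3 (g div 3) v \<le> digit3 (i div 3) v"
    using Suc.prems(1) by (auto simp: digit3_Suc)
  moreover have "g div 3 < 3 ^ N" using Suc.prems(2) by (simp add: div_less_iff_less_mult)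
  ultimately have "g div 3 \<le> i div 3" using Suc.IH by blast
  moreover have "g mod 3 \<le> i mod 3" using Suc.prems(1)[rule_format, of 0] by (simp add: digit3_0)
  ultimately show ?case using div_mult_mod_eq[of g 3] div_mult_mod_eq[of i 3] by linarith
qed

lemma digit3_lt: "digit3 x v < 3"
  by (simp add: digit3_def)

lemma emg_eq:
  assumes ch: "CHAR('a::comm_ring_1) = 3" and B: "\<not> 3 dvd ((m + 2 * g) choose g)"
  shows "emg m g = (\<lambda>w w'. of_nat ((m + 2 * g) choose g) * (bq (m + 2 * g) g g w w' :: 'a))"
proof -
  let ?r = "m + 2 * g"
  let ?N = "?r + 1"
  have gr: "g \<le> ?r" by simp
  have rN: "?r < 3 ^ ?N" using pow3_gt[of ?N] by simp
  have gN: "g < 3 ^ ?N" using rN gr by linarith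
  have luc: "(of_nat (?r choose g) :: 'a) = (\<Prod>v<?N. of_nat (digit3 ?r v choose digit3 g v))"
    by (rule lucas_digits[OF ch rN gN])
  have Bnz: "(of_nat (?r choose g) :: 'a) \<noteq> 0"
    using B ch by (simp add: of_nat_eq_0_iff_char_dvd)
  have dle: "digit3 g v \<le> digit3 ?r v" if "v < ?N" for v
  proof (rule ccontr)
    assume "\<not> ?thesis"
    then have "(of_nat (digit3 ?r v choose digit3 g v) :: 'a) = 0" by (simp add: binomial_eq_0)
    then have "(\<Prod>v<?N. (of_nat (digit3 ?r v choose digit3 g v) :: 'a)) = 0"
      using that by (intro prod_zero) auto
    then show False using luc Bnz by simp
  qed
  have e0: "emg m g = (\<lambda>w w'. \<Sum>i<3 ^ ?N. Phi m g 0 ?N i * (bq ?r g (3 ^ 0 * i) w w' :: 'a))"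
    unfolding emg_def using foldr_exp[OF ch, of 0 ?N ?N m g] by simp
  have Phig: "(Phi m g 0 ?N g :: 'a) = of_nat (?r choose g)"
    unfolding Phi_def luc using phi_diag[OF ch dle digit3_lt] by (intro prod.cong) simp_all
  show ?thesis
  proof (rule ext, rule ext)
    fix w w'
    have "(\<Sum>i<3 ^ ?N. Phi m g 0 ?N i * (bq ?r g (3 ^ 0 * i) w w' :: 'a))
        = (\<Sum>i<3 ^ ?N. if i = g then Phi m g 0 ?N g * bq ?r g g w w' else 0)"
    proof (rule sum.cong)
      fix i :: nat assume i: "i \<in> {..<3 ^ ?N}"
      show "Phi m g 0 ?N i * (bq ?r g (3 ^ 0 * i) w w' :: 'a) = (if i = g then Phi m g 0 ?N g * bq ?r g g w w' else 0)"
      proof (cases "i = g")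
        case False
        show ?thesis
        proof (cases "g < i")
          case True
          have "bq ?r g i = (\<lambda>_ _. (0::'a))" by (rule bq_zero[OF gr True])
          then show ?thesis using False by simp
        next
          case False2: False
          then have ig: "i < g" using False by simp
          have "(Phi m g 0 ?N i :: 'a) = 0"
          proof (rule ccontr)
            assume nz: "(Phi m g 0 ?N i :: 'a) \<noteq> 0"
            have "\<forall>v<?N. digit3 g v \<le> digit3 i v"
            proof (intro allI impI, rule ccontr)
              fix v assume v: "v < ?N" and "\<not> digit3 g v \<le> digit3 i v"
              then have "(phi (digit3 g v) (digit3 ?r v) (digit3 i v) :: 'a) = 0"
                using phi_low[OF dle[OF v] digit3_lt, where 'a='a] by simp
              then have "(Phi m g 0 ?N i :: 'a) = 0"
                unfolding Phi_def using v by (intro prod_zero) auto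
              then show False using nz by simp
            qed
            then have "g \<le> i" using dominance gN by blast
            then show False using ig by simp
          qed
          then show ?thesis using False by simp
        qed
      qed simp
    qed simp
    also have "\<dots> = Phi m g 0 ?N g * bq ?r g g w w'" using gN by simp
    finally show "emg m g w w' = of_nat (?r choose g) * (bq ?r g g w w' :: 'a)"
      using e0 Phig by simp
  qed
qed


lemma of_nat_mod3:
  assumes ch: "CHAR('a::comm_ring_1) = 3"
  shows "(of_nat n :: 'a) = of_nat (n mod 3)"
proof -
  have "(of_nat n :: 'a) = of_nat (3 * (n div 3) + n mod 3)" by simp
  also have "\<dots> = 3 * of_nat (n div 3) + of_nat (n mod 3)" by (simp only: of_nat_add of_nat_mult of_nat_numeral)
  also have "\<dots> = of_nat (n mod 3)" using char3_3[OF ch] by simp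
  finally show ?thesis .
qed

lemma sq1:
  assumes ch: "CHAR('a::comm_ring_1) = 3" and n: "\<not> 3 dvd n"
  shows "(of_nat n :: 'a) * of_nat n = 1"
proof -
  have h3: "(3::'a) = 0" by (rule char3_3[OF ch])
  have "n mod 3 \<noteq> 0" using n by (simp add: dvd_eq_mod_eq_0)
  moreover have "n mod 3 < 3" by simp
  ultimately have "n mod 3 = 1 \<or> n mod 3 = 2" by linarith
  then show ?thesis
  proof
    assume "n mod 3 = 1" then show ?thesis using of_nat_mod3[OF ch, of n] by simp
  next
    assume "n mod 3 = 2"
    then have "(of_nat n :: 'a) = 2" using of_nat_mod3[OF ch, of n] by simp
    moreover have "(2::'a) * 2 = 1 + 3" by simp
    ultimately show ?thesis using h3 by simp
  qed
qed

lemma uv_eq: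
  fixes m g :: nat
  defines "r \<equiv> m + 2 * g"
  shows "mmul r (\<lambda>w w'. c * mmul r (proj r (m + g)) (mmul r (dpf r g) (proj r r)) w w')
            (mmul r (proj r r) (mmul r (dpe r g) (proj r (m + g))))
       = (\<lambda>w w'. c * (bq r g g w w' :: 'a::comm_ring_1))"
proof -
  have gr: "g \<le> r" by (simp add: r_def)
  have P: "proj r (m + g) = (proj r (r - g) :: nat list \<Rightarrow> nat list \<Rightarrow> 'a)" by (simp add: r_def add.commute)
  have rE: "rowwt r 0 (mmul r (dpe r g) (proj r (r - g)) :: nat list \<Rightarrow> nat list \<Rightarrow> 'a)"
    using rowwt_dpe[OF rowwt_projr[OF gr], of g] by simp
  have ab: "mmul r (proj r r) (mmul r (dpe r g) (proj r (r - g))) = (mmul r (dpe r g) (proj r (r - g)) :: nat list \<Rightarrow> nat list \<Rightarrow> 'a)"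
    using proj_absorb[OF rE] by simp
  show ?thesis
    unfolding mmul_scal_left P
    by (simp only: mmul_assoc ab bq_def)
qed

lemma vu_eq:
  fixes m g :: nat
  defines "r \<equiv> m + 2 * g"
  shows "mmul r (mmul r (proj r r) (mmul r (dpe r g) (proj r (m + g))))
            (\<lambda>w w'. c * mmul r (proj r (m + g)) (mmul r (dpf r g) (proj r r)) w w')
       = (\<lambda>w w'. c * of_nat (r choose g) * (proj r r w w' :: 'a::comm_ring_1))"
proof -
  have gr: "g \<le> r" by (simp add: r_def)
  have P: "proj r (m + g) = (proj r (r - g) :: nat list \<Rightarrow> nat list \<Rightarrow> 'a)" by (simp add: r_def add.commute)
  have rF: "rowwt r g (mmul r (dpf r g) (proj r r) :: nat list \<Rightarrow> nat list \<Rightarrow> 'a)"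
    using rowwt_dpf[OF rowwt_projr[of 0 r], of g] by simp
  have ab: "mmul r (proj r (r - g)) (mmul r (dpf r g) (proj r r)) = (mmul r (dpf r g) (proj r r) :: nat list \<Rightarrow> nat list \<Rightarrow> 'a)"
    by (rule proj_absorb[OF rF gr])
  have core: "mmul r (proj r r) (mmul r (mmul r (dpe r g) (dpf r g)) (proj r r)) = (\<lambda>w w'. of_nat (r choose g) * (proj r r w w' :: 'a))"
  proof (rule ext, rule ext)
    fix w w'
    show "mmul r (proj r r) (mmul r (mmul r (dpe r g) (dpf r g)) (proj r r)) w w' = of_nat (r choose g) * (proj r r w w' :: 'a)"
    proof (cases "w \<in> words r \<and> w' \<in> words r \<and> nones w = r \<and> nones w' = r")
      case True
      then have t: "tw w = {}" "tw w' = {}" using nones_iff[of w r 0] nones_iff[of w' r 0] by auto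
      then have ww: "w' = w" using tw_inj[of w r w'] True by simp
      have "{A\<in>Pow {..<r}. upc A (tw w) g \<and> upc A (tw w') g} = {A. A \<subseteq> {..<r} \<and> card A = g}"
        using t by (auto simp: upc_def)
      then have cc: "card {A\<in>Pow {..<r}. upc A (tw w) g \<and> upc A (tw w') g} = r choose g"
        by (simp add: n_subsets)
      have "mmul r (proj r r) (mmul r (mmul r (dpe r g) (dpf r g)) (proj r r)) w w' = (mmul r (dpe r g) (dpf r g) w w' :: 'a)"
        using True by (simp only: mmul_proj_left mmul_proj_right if_True simp_thms)
      also have "\<dots> = of_nat (r choose g)" using True by (simp only: ef_entry cc if_True simp_thms)
      also have "(proj r r w w' :: 'a) = 1" using True ww by (simp add: proj_def)
      ultimately show ?thesis by simp
    next
      case False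
      then show ?thesis by (simp only: mmul_proj_left mmul_proj_right) (auto simp: proj_def)
    qed
  qed
  show ?thesis
    unfolding mmul_scal_right P
    by (simp only: mmul_assoc ab) (simp add: core[unfolded mmul_assoc] algebra_simps)
qed


lemma nones_mset: "nones w = size (filter_mset (\<lambda>x. x = 1) (mset w))"
  unfolding nones_def by (metis mset_filter size_mset)

lemma perm_word:
  assumes s: "\<sigma> permutes {..<r}" and w: "w \<in> words r"
  shows "map (\<lambda>i. w ! \<sigma> i) [0..<r] \<in> words r \<and> nones (map (\<lambda>i. w ! \<sigma> i) [0..<r]) = nones w"
proof -
  have l: "length w = r" using w by (simp add: words_len)
  have p: "map (\<lambda>i. w ! \<sigma> i) [0..<r] = permute_list \<sigma> w" by (simp add: permute_list_def l)
  have s': "\<sigma> permutes {..<length w}" using s l by simp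
  have "mset (permute_list \<sigma> w) = mset w" by (rule mset_permute_list[OF s'])
  then have "set (permute_list \<sigma> w) = set w" "nones (permute_list \<sigma> w) = nones w"
    by (auto simp: nones_mset dest: mset_eq_setD)
  then show ?thesis unfolding p using w l by (auto simp: words_def)
qed

definition ind :: "nat \<Rightarrow> nat \<Rightarrow> nat list \<Rightarrow> 'a::comm_ring_1" where
  "ind r k w = (if w \<in> words r \<and> nones w = k then 1 else 0)"

definition Sk :: "nat \<Rightarrow> nat \<Rightarrow> (nat list \<Rightarrow> 'a::comm_ring_1) set" where
  "Sk r k = range (\<lambda>c. \<lambda>w. c * ind r k w)"

lemma place_inv:
  assumes "\<sigma> permutes {..<r}"
  shows "place_act r \<sigma> (\<lambda>w. c * ind r k w) = (\<lambda>w. c * (ind r k w :: 'a::comm_ring_1))"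
proof
  fix w
  show "place_act r \<sigma> (\<lambda>w. c * ind r k w) w = c * (ind r k w :: 'a)"
    using perm_word[OF assms, of w] by (auto simp: place_act_def ind_def)
qed

lemma Sk_sub: "FSr_submodule r (Sk r k :: (nat list \<Rightarrow> 'a::comm_ring_1) set)"
  unfolding FSr_submodule_def
proof (intro conjI ballI allI impI)
  show "Sk r k \<subseteq> vecs r" by (auto simp: Sk_def vecs_def ind_def)
  show "(\<lambda>_. 0) \<in> (Sk r k :: (nat list \<Rightarrow> 'a) set)" unfolding Sk_def by (rule range_eqI[of _ _ 0]) simp
next
  fix x y :: "nat list \<Rightarrow> 'a" assume "x \<in> Sk r k" "y \<in> Sk r k"
  then obtain a b where "x = (\<lambda>w. a * ind r k w)" "y = (\<lambda>w. b * ind r k w)" by (auto simp: Sk_def)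
  then show "(\<lambda>w. x w + y w) \<in> Sk r k" unfolding Sk_def
    by (intro range_eqI[of _ _ "a + b"]) (simp add: algebra_simps)
next
  fix c :: 'a and x :: "nat list \<Rightarrow> 'a" assume "x \<in> Sk r k"
  then obtain a where "x = (\<lambda>w. a * ind r k w)" by (auto simp: Sk_def)
  then show "(\<lambda>w. c * x w) \<in> Sk r k" unfolding Sk_def
    by (intro range_eqI[of _ _ "c * a"]) (simp add: algebra_simps)
next
  fix \<sigma> and x :: "nat list \<Rightarrow> 'a" assume s: "\<sigma> permutes {..<r}" and "x \<in> Sk r k"
  then obtain a where a: "x = (\<lambda>w. a * ind r k w)" by (auto simp: Sk_def)
  have "place_act r \<sigma> x = x" unfolding a by (rule place_inv[OF s])
  then show "place_act r \<sigma> x \<in> Sk r k" using \<open>x \<in> Sk r k\<close> by simp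
qed

lemma Sk_iso:
  assumes w0: "w0 \<in> words r" "nones w0 = k" and w1: "w1 \<in> words r" "nones w1 = k'"
  shows "FSr_iso r (Sk r k :: (nat list \<Rightarrow> 'a::field) set) (Sk r k')"
  unfolding FSr_iso_def
proof (intro conjI Sk_sub)
  define \<phi> :: "(nat list \<Rightarrow> 'a) \<Rightarrow> (nat list \<Rightarrow> 'a)" where "\<phi> f = (\<lambda>w. f w0 * ind r k' w)" for f
  have i0: "ind r k w0 = (1::'a)" "ind r k' w1 = (1::'a)" using w0 w1 by (auto simp: ind_def)
  have phic: "\<phi> (\<lambda>w. c * ind r k w) = (\<lambda>w. c * ind r k' w)" for c by (simp add: \<phi>_def i0)
  have "bij_betw \<phi> (Sk r k) (Sk r k')"
    unfolding bij_betw_def inj_on_def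
  proof (intro conjI ballI impI)
    fix x y :: "nat list \<Rightarrow> 'a" assume "x \<in> Sk r k" "y \<in> Sk r k" "\<phi> x = \<phi> y"
    then obtain a b where ab: "x = (\<lambda>w. a * ind r k w)" "y = (\<lambda>w. b * ind r k w)" by (auto simp: Sk_def)
    then have "(\<lambda>w. a * ind r k' w) = (\<lambda>w. b * (ind r k' w :: 'a))" using \<open>\<phi> x = \<phi> y\<close> phic by simp
    then have "a * ind r k' w1 = b * (ind r k' w1 :: 'a)" by metis
    then have "a = b" using i0 by simp
    then show "x = y" using ab by simp
  next
    show "\<phi> ` Sk r k = Sk r k'"
      unfolding Sk_def image_image phic by simp
  qed
  moreover have "\<forall>x\<in>Sk r k. \<forall>y\<in>Sk r k. \<phi> (\<lambda>w. x w + y w) = (\<lambda>w. \<phi> x w + \<phi> y w)"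
    by (simp add: \<phi>_def algebra_simps)
  moreover have "\<forall>c. \<forall>x\<in>Sk r k. \<phi> (\<lambda>w. c * x w) = (\<lambda>w. c * \<phi> x w)"
    by (simp add: \<phi>_def algebra_simps)
  moreover have "\<forall>\<sigma>. \<sigma> permutes {..<r} \<longrightarrow> (\<forall>x\<in>Sk r k. \<phi> (place_act r \<sigma> x) = place_act r \<sigma> (\<phi> x))"
  proof (intro allI impI ballI)
    fix \<sigma> and x :: "nat list \<Rightarrow> 'a" assume s: "\<sigma> permutes {..<r}" and "x \<in> Sk r k"
    then obtain a where a: "x = (\<lambda>w. a * ind r k w)" by (auto simp: Sk_def)
    show "\<phi> (place_act r \<sigma> x) = place_act r \<sigma> (\<phi> x)"
      unfolding a phic place_inv[OF s] ..
  qed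
  ultimately show "\<exists>\<phi>. bij_betw \<phi> (Sk r k :: (nat list \<Rightarrow> 'a) set) (Sk r k') \<and>
        (\<forall>x\<in>Sk r k. \<forall>y\<in>Sk r k. \<phi> (\<lambda>w. x w + y w) = (\<lambda>w. \<phi> x w + \<phi> y w)) \<and>
        (\<forall>c. \<forall>x\<in>Sk r k. \<phi> (\<lambda>w. c * x w) = (\<lambda>w. c * \<phi> x w)) \<and>
        (\<forall>\<sigma>. \<sigma> permutes {..<r} \<longrightarrow> (\<forall>x\<in>Sk r k. \<phi> (place_act r \<sigma> x) = place_act r \<sigma> (\<phi> x)))"
    by blast
qed


lemma bq_g_entry:
  assumes gr: "g \<le> r"
  shows "(bq r g g w w' :: 'a::comm_ring_1) = ind r (r - g) w * ind r (r - g) w'"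
proof -
  have e: "(bq r g g :: nat list \<Rightarrow> nat list \<Rightarrow> 'a) = mmul r (proj r (r - g)) (mmul r (mmul r (dpf r g) (dpe r g)) (proj r (r - g)))"
    unfolding bq_def by (simp only: mmul_assoc)
  show ?thesis
  proof (cases "w \<in> words r \<and> w' \<in> words r \<and> nones w = r - g \<and> nones w' = r - g")
    case True
    then have c: "card (tw w) = g" "card (tw w') = g" using nones_iff[OF _ gr] by auto
    have cc: "card {A\<in>Pow {..<r}. upc (tw w) A g \<and> upc (tw w') A g} = 1"
    proof -
      have X: "tw w' \<subseteq> {..<r}" and Z: "tw w \<subseteq> {..<r}" using True tw_sub by auto
      show ?thesis using cnt_fe[OF X Z c(2), of g g] c by simp
    qed
    have "(bq r g g w w' :: 'a) = mmul r (dpf r g) (dpe r g) w w'"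
      unfolding e using True by (simp only: mmul_proj_left mmul_proj_right if_True simp_thms)
    also have "\<dots> = 1" using True by (simp only: fe_entry cc if_True simp_thms of_nat_1)
    finally show ?thesis using True by (simp add: ind_def)
  next
    case False
    then show ?thesis unfolding e by (simp only: mmul_proj_left mmul_proj_right) (auto simp: ind_def)
  qed
qed

lemma image_Sk:
  assumes ch: "CHAR('a::field) = 3" and B: "\<not> 3 dvd ((m + 2 * g) choose g)"
  shows "mapply (m + 2 * g) (emg m g :: nat list \<Rightarrow> nat list \<Rightarrow> 'a) ` permmod (m + 2 * g) (m + g) = Sk (m + 2 * g) (m + g)"
proof -
  let ?r = "m + 2 * g"
  let ?B = "(of_nat (?r choose g) :: 'a)"
  have Bnz: "?B \<noteq> 0" using B ch by (simp add: of_nat_eq_0_iff_char_dvd)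
  have rg: "?r - g = m + g" by simp
  have gr: "g \<le> ?r" by simp
  have map_eq: "mapply ?r (emg m g) x = (\<lambda>w. (?B * (\<Sum>w'\<in>words ?r. ind ?r (m + g) w' * x w')) * ind ?r (m + g) w)" for x :: "nat list \<Rightarrow> 'a"
  proof
    fix w
    show "mapply ?r (emg m g) x w = (?B * (\<Sum>w'\<in>words ?r. ind ?r (m + g) w' * x w')) * ind ?r (m + g) w"
      unfolding mapply_def emg_eq[OF ch B] bq_g_entry[OF gr] rg
      by (auto simp: ind_def sum_distrib_left algebra_simps)
  qed
  define w0 where "w0 = wd ?r {..<g}"
  have w0: "w0 \<in> words ?r" "nones w0 = m + g"
  proof -
    show "w0 \<in> words ?r" unfolding w0_def by (rule wd_words)
    have "tw w0 = {..<g}" unfolding w0_def by (rule tw_wd) auto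
    then show "nones w0 = m + g" using nones_tw[OF \<open>w0 \<in> words ?r\<close>] by simp
  qed
  show ?thesis
  proof
    show "mapply ?r (emg m g :: nat list \<Rightarrow> nat list \<Rightarrow> 'a) ` permmod ?r (m + g) \<subseteq> Sk ?r (m + g)"
      unfolding map_eq Sk_def by auto
  next
    show "Sk ?r (m + g) \<subseteq> mapply ?r (emg m g :: nat list \<Rightarrow> nat list \<Rightarrow> 'a) ` permmod ?r (m + g)"
    proof
      fix y assume "y \<in> (Sk ?r (m + g) :: (nat list \<Rightarrow> 'a) set)"
      then obtain c where y: "y = (\<lambda>w. c * ind ?r (m + g) w)" by (auto simp: Sk_def)
      define x :: "nat list \<Rightarrow> 'a" where "x = (\<lambda>w. if w = w0 then c / ?B else 0)"
      have xp: "x \<in> permmod ?r (m + g)" using w0 by (auto simp: x_def permmod_def vecs_def)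
      have "(\<Sum>w'\<in>words ?r. ind ?r (m + g) w' * x w') = (\<Sum>w'\<in>words ?r. if w' = w0 then c / ?B else 0)"
        by (rule sum.cong) (auto simp: x_def ind_def w0)
      also have "\<dots> = c / ?B" using w0 by (simp add: sum.delta')
      finally have "(\<Sum>w'\<in>words ?r. ind ?r (m + g) w' * x w') = c / ?B" .
      then have "mapply ?r (emg m g :: nat list \<Rightarrow> nat list \<Rightarrow> 'a) x = y" unfolding map_eq y using Bnz by simp
      then show "y \<in> mapply ?r (emg m g :: nat list \<Rightarrow> nat list \<Rightarrow> 'a) ` permmod ?r (m + g)" using xp by blast
    qed
  qed
qed

lemma permmod_Sk: "permmod r r = (Sk r r :: (nat list \<Rightarrow> 'a::comm_ring_1) set)"
proof
  define w1 where "w1 = wd r {}"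
  have w1: "w1 \<in> words r" "nones w1 = r"
  proof -
    show "w1 \<in> words r" unfolding w1_def by (rule wd_words)
    have "tw w1 = {}" unfolding w1_def by (rule tw_wd) auto
    then show "nones w1 = r" using nones_tw[OF \<open>w1 \<in> words r\<close>] by simp
  qed
  have uniq: "w \<in> words r \<Longrightarrow> nones w = r \<Longrightarrow> w = w1" for w
  proof -
    assume "w \<in> words r" "nones w = r"
    then have "tw w = {}" using nones_iff[of w r 0] by auto
    moreover have "tw w1 = {}" using w1 nones_iff[of w1 r 0] by auto
    ultimately show "w = w1" using tw_inj \<open>w \<in> words r\<close> w1(1) by metis
  qed
  show "permmod r r \<subseteq> (Sk r r :: (nat list \<Rightarrow> 'a) set)"
  proof
    fix y :: "nat list \<Rightarrow> 'a" assume y: "y \<in> permmod r r"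
    have "y = (\<lambda>w. y w1 * ind r r w)"
    proof
      fix w
      show "y w = y w1 * ind r r w"
      proof (cases "y w = 0")
        case True
        then show ?thesis using uniq by (auto simp: ind_def)
      next
        case False
        then have "w \<in> words r" "nones w = r" using y by (auto simp: permmod_def vecs_def)
        then show ?thesis using uniq by (auto simp: ind_def)
      qed
    qed
    then show "y \<in> Sk r r" unfolding Sk_def by blast
  qed
  show "(Sk r r :: (nat list \<Rightarrow> 'a) set) \<subseteq> permmod r r"
    by (auto simp: Sk_def permmod_def vecs_def ind_def split: if_splits)
qed

theorem mainTheorem12:
  fixes l1 l2 m g :: nat
  assumes char3: "CHAR('a::field) = 3"
    and partition: "l1 \<ge> l2"
    and m_def: "m = l1 - l2"
    and g_le: "g \<le> l2"
    and B_nz: "\<not> (3::nat) dvd ((m + 2 * g) choose g)"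
  shows "FSr_iso (m + 2 * g)
           (mapply (m + 2 * g) (emg m g :: nat list \<Rightarrow> nat list \<Rightarrow> 'a) ` permmod (m + 2 * g) (m + g))
           (permmod (m + 2 * g) (m + 2 * g))
       \<and> (let r = m + 2 * g;
              u = (\<lambda>w w'. of_nat ((m + 2 * g) choose g) *
                     mmul r (proj r (m + g)) (mmul r (dpf r g) (proj r r)) w w' :: 'a);
              v = mmul r (proj r r) (mmul r (dpe r g) (proj r (m + g))) :: nat list \<Rightarrow> nat list \<Rightarrow> 'a
          in mmul r u v = emg m g \<and> mmul r v u = proj r r)"
proof (intro conjI)
  let ?r = "m + 2 * g"
  define w0 where "w0 = wd ?r {..<g}"
  have w0: "w0 \<in> words ?r" "nones w0 = m + g"
  proof -
    show "w0 \<in> words ?r" unfolding w0_def by (rule wd_words)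
    have "tw w0 = {..<g}" unfolding w0_def by (rule tw_wd) auto
    then show "nones w0 = m + g" using nones_tw[OF \<open>w0 \<in> words ?r\<close>] by simp
  qed
  define w1 where "w1 = wd ?r {}"
  have w1: "w1 \<in> words ?r" "nones w1 = ?r"
  proof -
    show "w1 \<in> words ?r" unfolding w1_def by (rule wd_words)
    have "tw w1 = {}" unfolding w1_def by (rule tw_wd) auto
    then show "nones w1 = ?r" using nones_tw[OF \<open>w1 \<in> words ?r\<close>] by simp
  qed
  show "FSr_iso ?r (mapply ?r (emg m g :: nat list \<Rightarrow> nat list \<Rightarrow> 'a) ` permmod ?r (m + g)) (permmod ?r ?r)"
    unfolding image_Sk[OF char3 B_nz] permmod_Sk by (rule Sk_iso[OF w0 w1])
  have uv: "mmul ?r (\<lambda>w w'. of_nat (?r choose g) * mmul ?r (proj ?r (m + g)) (mmul ?r (dpf ?r g) (proj ?r ?r)) w w')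
            (mmul ?r (proj ?r ?r) (mmul ?r (dpe ?r g) (proj ?r (m + g)))) = (emg m g :: nat list \<Rightarrow> nat list \<Rightarrow> 'a)"
    unfolding uv_eq emg_eq[OF char3 B_nz] ..
  have vu: "mmul ?r (mmul ?r (proj ?r ?r) (mmul ?r (dpe ?r g) (proj ?r (m + g))))
            (\<lambda>w w'. of_nat (?r choose g) * mmul ?r (proj ?r (m + g)) (mmul ?r (dpf ?r g) (proj ?r ?r)) w w')
         = (proj ?r ?r :: nat list \<Rightarrow> nat list \<Rightarrow> 'a)"
    unfolding vu_eq sq1[OF char3 B_nz] by simp
  show "let r = m + 2 * g;
              u = (\<lambda>w w'. of_nat ((m + 2 * g) choose g) *
                     mmul r (proj r (m + g)) (mmul r (dpf r g) (proj r r)) w w' :: 'a);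
              v = mmul r (proj r r) (mmul r (dpe r g) (proj r (m + g))) :: nat list \<Rightarrow> nat list \<Rightarrow> 'a
          in mmul r u v = emg m g \<and> mmul r v u = proj r r"
    unfolding Let_def using uv vu by simp
qed


end
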